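(* Let $i$ be an even positive integer, $n=3i\pm1$, $q=2^n$, and $s=2^{2i}-2^i+1$. Let $B_s=\{(x+1)^s+x^s:x\in\mathrm{GF}(q)\}$ and let $d$ be the inverse of $s$ modulo $2^n-1$. Then for all $\mu\in\mathrm{GF}(q)$, \[\hat f_{B_s}(\mu)=\hat f_E(\mu^d)=\sum_{x\in\mathrm{GF}(q)}(-1)^{\mathrm{Tr}(x^{2^i+1}+\mu^dx)},\] where $E=\{x\in\mathrm{GF}(q):\mathrm{Tr}(x^{2^i+1})=1\}$.
   Context: $\mathrm{Tr}$ is the absolute trace $\mathrm{GF}(2^n)\to\mathrm{GF}(2)$. For $S\subseteq\mathrm{GF}(q)$, $f_S$ is its characteristic function as a Boolean function, and $\hat f(\mu)=\sum_{x\in\mathrm{GF}(2^n)}(-1)^{f(x)+\mathrm{Tr}(\mu x)}$ is the Walsh transform. Under the hypotheses, $\gcd(s,2^n-1)=1$, so $d$ exists. *)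

theory Defs
  imports "HOL-Analysis.Analysis"
begin

text \<open>The field GF(2^n) is modelled by an arbitrary finite field type of cardinality 2^n.
  Absolute trace GF(2^n) -> GF(2), valued in the prime subfield {0,1}.\<close>
definition Tr :: "nat \<Rightarrow> 'a::field \<Rightarrow> 'a" where
  "Tr n x = (\<Sum>k<n. x ^ (2 ^ k))"

definition Tr_bit :: "nat \<Rightarrow> 'a::field \<Rightarrow> bool" where
  "Tr_bit n x = (Tr n x \<noteq> 0)"

definition charf :: "'a set \<Rightarrow> 'a \<Rightarrow> bool" where
  "charf S x = (x \<in> S)"

definition walsh :: "nat \<Rightarrow> ('a::{field,finite} \<Rightarrow> bool) \<Rightarrow> 'a \<Rightarrow> int" where
  "walsh n f \<mu> = (\<Sum>x\<in>UNIV. (-1::int) ^ (of_bool (f x) + of_bool (Tr_bit n (\<mu> * x))))"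

end

theory Submission
  imports Defs "HOL-Computational_Algebra.Polynomial"
begin

locale gf2n =
  fixes n :: nat and ty :: "'a::{field,finite} itself"
  assumes card: "CARD('a) = 2 ^ n"
begin

lemma card_ge2: "CARD('a) \<ge> 2"
proof -
  have "{0::'a, 1} \<subseteq> UNIV" by simp
  hence "card {0::'a, 1} \<le> CARD('a)" by (intro card_mono) auto
  thus ?thesis by simp
qed

lemma n_pos: "n > 0"
  using card_ge2 card by (cases n) auto

lemma pow_card_minus1: "(x::'a) \<noteq> 0 \<Longrightarrow> x ^ (CARD('a) - 1) = 1"
proof -
  assume x: "x \<noteq> 0"
  let ?S = "UNIV - {0::'a}"
  have bij: "bij_betw (\<lambda>y. x * y) ?S ?S"
    unfolding bij_betw_def
  proof
    show "inj_on ((*) x) ?S" using x by (auto simp: inj_on_def)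
    show "(*) x ` ?S = ?S"
    proof
      show "(*) x ` ?S \<subseteq> ?S" using x by auto
      show "?S \<subseteq> (*) x ` ?S"
      proof
        fix y assume "y \<in> ?S"
        hence "y = x * (y / x)" "y / x \<in> ?S" using x \<open>y \<in> ?S\<close> by auto
        thus "y \<in> (*) x ` ?S" by blast
      qed
    qed
  qed
  have "(\<Prod>y\<in>?S. x * y) = (\<Prod>y\<in>?S. y)"
    using prod.reindex_bij_betw[OF bij, of "\<lambda>y. y"] by simp
  moreover have "(\<Prod>y\<in>?S. x * y) = x ^ card ?S * (\<Prod>y\<in>?S. y)"
    by (simp add: prod.distrib)
  moreover have "(\<Prod>y\<in>?S. y) \<noteq> 0" by (simp add: prod_zero_iff)
  moreover have "card ?S = CARD('a) - 1" by (simp add: card_Diff_subset)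
  ultimately show ?thesis by simp
qed

lemma pow_card: "(x::'a) ^ CARD('a) = x"
proof (cases "x = 0")
  case True thus ?thesis using card_ge2 by simp
next
  case False
  have "x ^ CARD('a) = x * x ^ (CARD('a) - 1)"
  proof -
    have "CARD('a) = Suc (CARD('a) - 1)" using card_ge2 by simp
    hence "x ^ CARD('a) = x ^ Suc (CARD('a) - 1)" by (rule arg_cong)
    also have "\<dots> = x * x ^ (CARD('a) - 1)" by (rule power_Suc)
    finally show ?thesis .
  qed
  thus ?thesis using pow_card_minus1[OF False] by simp
qed

lemma pow_q: "(x::'a) ^ (2 ^ n) = x"
  using pow_card card by simp

lemma two_zero: "(2::'a) = 0"
proof -
  have "((-1)::'a) ^ (2 ^ n) = 1"
    using n_pos by (intro neg_one_even_power) simp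
  hence "(-1::'a) = 1" using pow_q[of "-1"] by simp
  hence "(1::'a) + 1 = 0" by (metis add.right_inverse)
  thus ?thesis by simp
qed

lemma add_self: "(x::'a) + x = 0"
proof -
  have "x + x = 2 * x" by simp
  thus ?thesis using two_zero by simp
qed

lemma minus_eq: "- (x::'a) = x"
  using add_self[of x] by (metis add_eq_0_iff)

lemma diff_eq_add: "(x::'a) - y = x + y"
  by (metis diff_minus_eq_add minus_eq)

lemma sq_add: "((x::'a) + y) ^ 2 = x ^ 2 + y ^ 2"
proof -
  have "(x + y) ^ 2 = x^2 + 2 * x * y + y^2" by (simp add: power2_sum)
  thus ?thesis using two_zero by simp
qed

lemma frob_add: "((x::'a) + y) ^ (2 ^ k) = x ^ (2 ^ k) + y ^ (2 ^ k)"
proof (induction k)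
  case 0 thus ?case by simp
next
  case (Suc k)
  have "(x + y) ^ (2 ^ Suc k) = ((x + y) ^ (2 ^ k)) ^ 2"
    by (simp add: power_mult[symmetric] mult.commute)
  also have "\<dots> = (x ^ (2 ^ k)) ^ 2 + (y ^ (2 ^ k)) ^ 2" using Suc by (simp add: sq_add)
  also have "\<dots> = x ^ (2 ^ Suc k) + y ^ (2 ^ Suc k)"
    by (simp add: power_mult[symmetric] mult.commute)
  finally show ?case .
qed

lemma frob_sum: "(\<Sum>j\<in>A. (f j::'a)) ^ (2 ^ k) = (\<Sum>j\<in>A. f j ^ (2 ^ k))"
proof (induction A rule: infinite_finite_induct)
  case (infinite A) thus ?case by simp
next
  case empty thus ?case by simp
next
  case (insert x F) thus ?case by (simp add: frob_add)
qed

lemma frob_inj: "(x::'a) ^ (2 ^ k) = y ^ (2 ^ k) \<Longrightarrow> x = y"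
proof -
  assume a: "x ^ (2 ^ k) = y ^ (2 ^ k)"
  have "(x + y) ^ (2 ^ k) = x ^ (2 ^ k) + y ^ (2 ^ k)" by (rule frob_add)
  also have "\<dots> = 0" using a add_self by simp
  finally have "(x + y) ^ (2 ^ k) = 0" .
  hence "x + y = 0" by simp
  hence "x + y = y + y" using add_self[of y] by simp
  thus "x = y" by (rule add_right_imp_eq)
qed

lemma pow_pow2_mult: "(x::'a) ^ (2 ^ (n * m + k)) = x ^ (2 ^ k)"
proof (induction m)
  case 0 thus ?case by simp
next
  case (Suc m)
  have "x ^ (2 ^ (n * Suc m + k)) = (x ^ (2 ^ (n * m + k))) ^ (2 ^ n)"
    by (simp add: power_mult[symmetric] power_add[symmetric] algebra_simps)
  thus ?case using Suc pow_q by simp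
qed

lemma pow_pow2_mod: "(x::'a) ^ (2 ^ k) = x ^ (2 ^ (k mod n))"
  using pow_pow2_mult[of x "k div n" "k mod n"] by simp

lemma Tr_add: "Tr n ((x::'a) + y) = Tr n x + Tr n y"
  unfolding Tr_def by (simp add: frob_add sum.distrib)

lemma Tr_zero[simp]: "Tr n (0::'a) = 0"
  unfolding Tr_def by (intro sum.neutral) simp

lemma Tr_sq: "Tr n ((x::'a) ^ 2) = Tr n x"
proof -
  have "Tr n (x ^ 2) = (\<Sum>k<n. x ^ (2 ^ Suc k))"
    unfolding Tr_def by (simp add: power_mult[symmetric] mult.commute)
  also have "\<dots> = (\<Sum>k\<in>{1..n}. x ^ (2 ^ k))"
    by (rule sum.reindex_bij_witness[of _ "\<lambda>k. k - 1" Suc]) auto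
  also have "\<dots> = (\<Sum>k<n. x ^ (2 ^ k))"
  proof -
    have "(\<Sum>k\<in>{1..n}. x ^ (2 ^ k)) = (\<Sum>k\<in>{0..n}. x ^ (2 ^ k)) - x"
      using sum.atLeast_Suc_atMost[of 0 n "\<lambda>k. x ^ (2 ^ k)"] by simp
    also have "(\<Sum>k\<in>{0..n}. x ^ (2 ^ k)) = (\<Sum>k<n. x ^ (2 ^ k)) + x"
      using pow_q by (simp add: atLeast0AtMost lessThan_Suc_atMost[symmetric])
    finally show ?thesis by simp
  qed
  finally show ?thesis unfolding Tr_def .
qed

lemma Tr_frob: "Tr n ((x::'a) ^ (2 ^ k)) = Tr n x"
proof (induction k)
  case 0 thus ?case by simp
next
  case (Suc k)
  have "x ^ (2 ^ Suc k) = (x ^ (2 ^ k)) ^ 2" by (simp add: power_mult[symmetric] mult.commute)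
  thus ?case using Suc Tr_sq by simp
qed

lemma Tr_sq_self: "(Tr n (x::'a)) ^ 2 = Tr n x"
proof -
  have "(Tr n x) ^ 2 = Tr n (x ^ 2)"
    unfolding Tr_def using frob_sum[of "\<lambda>k. x ^ (2 ^ k)" "{..<n}" 1]
    by (simp add: power_mult[symmetric] mult.commute)
  thus ?thesis using Tr_sq by simp
qed

lemma Tr_01: "Tr n (x::'a) = 0 \<or> Tr n x = 1"
proof -
  have "Tr n x * (Tr n x - 1) = 0" using Tr_sq_self[of x] by (simp add: power2_eq_square algebra_simps)
  thus ?thesis by simp
qed

lemma Tr_one: "odd n \<Longrightarrow> Tr n (1::'a) = 1"
proof -
  assume "odd n"
  then obtain m where m: "n = 2 * m + 1" by (metis oddE)
  have "Tr n (1::'a) = of_nat n" unfolding Tr_def by simp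
  also have "\<dots> = 2 * of_nat m + 1" using m by simp
  finally show ?thesis using two_zero by simp
qed

lemma Tr_nonzero_exists: "\<exists>x::'a. Tr n x \<noteq> 0"
proof (rule ccontr)
  assume "\<not> ?thesis"
  hence all0: "\<And>x. Tr n (x::'a) = 0" by simp
  define p :: "'a poly" where "p = (\<Sum>k<n. monom 1 (2 ^ k))"
  have ev: "poly p x = Tr n x" for x
    unfolding p_def Tr_def by (simp add: poly_sum poly_monom)
  have coeff: "coeff p (2 ^ (n - 1)) = 1"
  proof -
    have "coeff p (2 ^ (n - 1)) = (\<Sum>k<n. if 2 ^ k = (2::nat) ^ (n - 1) then 1 else 0)"
      unfolding p_def by (simp add: coeff_sum coeff_monom)
    also have "\<dots> = (\<Sum>k<n. if k = n - 1 then 1 else 0)"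
      by (intro sum.cong refl) (simp add: power_inject_exp)
    also have "\<dots> = 1" using n_pos by simp
    finally show ?thesis .
  qed
  have deg: "degree p \<le> 2 ^ (n - 1)"
    unfolding p_def
  proof (intro degree_sum_le)
    fix k assume "k \<in> {..<n}"
    hence "(2::nat) ^ k \<le> 2 ^ (n - 1)" by (intro power_increasing) auto
    thus "degree (monom (1::'a) (2 ^ k)) \<le> 2 ^ (n - 1)" by (simp add: degree_monom_eq)
  qed simp
  have pne: "p \<noteq> 0" using coeff by auto
  have "card {x. poly p x = 0} \<le> degree p" by (rule card_poly_roots_bound[OF pne])
  moreover have "{x. poly p x = 0} = (UNIV :: 'a set)" using all0 ev by auto
  ultimately have "CARD('a) \<le> 2 ^ (n - 1)" using deg by simp
  moreover have "(2::nat) ^ (n - 1) < 2 ^ n" using n_pos by (intro power_strict_increasing) auto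
  ultimately show False using card n_pos by simp
qed

end

lemma sum_inj_UNIV:
  fixes f :: "'a::finite \<Rightarrow> 'a" and g :: "'a \<Rightarrow> 'b::comm_monoid_add"
  assumes "inj f"
  shows "(\<Sum>x\<in>UNIV. g (f x)) = (\<Sum>x\<in>UNIV. g x)"
proof -
  have s: "surj f" using finite_UNIV_inj_surj[OF _ assms] by simp
  have "(\<Sum>x\<in>UNIV. g (f x)) = (\<Sum>x\<in>f ` UNIV. g x)"
    using sum.reindex[OF assms, of g] by simp
  thus ?thesis using s by simp
qed

lemma int_sq_ne_pow2_odd: "(w::int) ^ 2 \<noteq> 2 ^ (2 * k + 1)"
proof (induction k arbitrary: w)
  case 0
  show ?case
  proof
    assume h: "w ^ 2 = 2 ^ (2 * 0 + 1)"
    hence "even (w ^ 2)" by simp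
    hence "even w" by simp
    then obtain v where "w = 2 * v" by blast
    hence "4 * v ^ 2 = 2" using h by (simp add: power_mult_distrib)
    hence "2 * (2 * v ^ 2) = 2 * 1" by simp
    hence "2 * v ^ 2 = 1" by linarith
    thus False by presburger
  qed
next
  case (Suc k)
  show ?case
  proof
    assume h: "w ^ 2 = 2 ^ (2 * Suc k + 1)"
    hence "even (w ^ 2)" by simp
    hence "even w" by simp
    then obtain v where v: "w = 2 * v" by blast
    have "(2::int) ^ (2 * Suc k + 1) = 4 * 2 ^ (2 * k + 1)" by (simp add: power_add)
    hence "4 * v ^ 2 = 4 * 2 ^ (2 * k + 1)" using h v by (simp add: power_mult_distrib)
    hence "v ^ 2 = 2 ^ (2 * k + 1)" by simp
    thus False using Suc.IH by blast
  qed
qed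

context gf2n
begin

definition chi :: "'a \<Rightarrow> int" where
  "chi x = (-1) ^ (of_bool (Tr_bit n x))"

lemma chi_alt: "chi x = (if Tr n x = 0 then 1 else -1)"
  unfolding chi_def Tr_bit_def by simp

lemma Tr_add_cases:
  "Tr n (x + y) = 0 \<longleftrightarrow> (Tr n x = 0 \<longleftrightarrow> Tr n (y::'a) = 0)"
proof -
  have "(1::'a) + 1 = 0" by (rule add_self)
  thus ?thesis using Tr_01[of x] Tr_01[of y] Tr_add[of x y] by auto
qed

lemma chi_add: "chi ((x::'a) + y) = chi x * chi y"
  unfolding chi_alt using Tr_add_cases[of x y] by auto

lemma chi_zero[simp]: "chi 0 = 1"
  unfolding chi_alt by simp

lemma chi_sq[simp]: "chi x * chi x = 1"
  unfolding chi_alt by simp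

lemma chi_pm: "chi x = 1 \<or> chi x = -1"
  unfolding chi_alt by simp

lemma chi_one: "odd n \<Longrightarrow> chi 1 = -1"
  unfolding chi_alt using Tr_one by simp

lemma chi_frob: "chi ((x::'a) ^ (2 ^ k)) = chi x"
  unfolding chi_alt using Tr_frob by simp

lemma chi_sq_arg: "chi ((x::'a) ^ 2) = chi x"
  unfolding chi_alt using Tr_sq by simp

lemma chi_sum_id: "(\<Sum>x\<in>UNIV. chi (x::'a)) = 0"
proof -
  obtain x0 :: 'a where x0: "Tr n x0 \<noteq> 0" using Tr_nonzero_exists by blast
  have cx0: "chi x0 = -1" unfolding chi_alt using x0 by simp
  have inj: "inj (\<lambda>x. x + x0)" by (auto simp: inj_on_def)
  have "(\<Sum>x\<in>UNIV. chi x) = (\<Sum>x\<in>UNIV. chi (x + x0))"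
    using sum_inj_UNIV[OF inj, of chi] by simp
  also have "\<dots> = - (\<Sum>x\<in>UNIV. chi x)"
    by (simp add: chi_add cx0 sum_negf)
  finally show ?thesis by simp
qed

lemma chi_sum: "(\<Sum>x\<in>UNIV. chi (a * (x::'a))) = (if a = 0 then int CARD('a) else 0)"
proof (cases "a = 0")
  case True thus ?thesis by simp
next
  case False
  have inj: "inj (\<lambda>x. a * x)" using False by (auto simp: inj_on_def)
  show ?thesis using sum_inj_UNIV[OF inj, of chi] chi_sum_id False by simp
qed

lemma pp: "((x::'a) ^ (2 ^ a)) ^ (2 ^ b) = x ^ (2 ^ (a + b))"
  by (simp add: power_mult[symmetric] power_add)

lemma pow_iter: "(x::'a) ^ (2 ^ k) = x \<Longrightarrow> x ^ (2 ^ (k * m)) = x"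
proof (induction m)
  case 0 thus ?case by simp
next
  case (Suc m)
  have "x ^ (2 ^ (k * Suc m)) = (x ^ (2 ^ (k * m))) ^ (2 ^ k)"
    by (simp add: pp algebra_simps)
  thus ?case using Suc by simp
qed

lemma fixed_coprime:
  assumes "coprime k n" "k > 0" "(x::'a) ^ (2 ^ k) = x"
  shows "x ^ 2 = x"
proof -
  obtain u v where uv: "k * u = n * v + gcd k n" using bezout_nat[of k n] assms(2) by auto
  have g: "gcd k n = 1" using assms(1) by simp
  have "x = x ^ (2 ^ (k * u))" using pow_iter[OF assms(3)] by simp
  also have "\<dots> = x ^ (2 ^ (n * v + 1))" using uv g by simp
  also have "\<dots> = x ^ (2 ^ 1)" by (rule pow_pow2_mult)
  finally show ?thesis by simp
qed

lemma sq_self_01: "(x::'a) ^ 2 = x \<Longrightarrow> x = 0 \<or> x = 1"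
proof -
  assume "x ^ 2 = x"
  hence "x * (x - 1) = 0" by (simp add: power2_eq_square algebra_simps)
  thus ?thesis by simp
qed

lemma gold_inj:
  assumes "coprime (2 * i) n" "i > 0" "(x::'a) ^ (2 ^ i + 1) = y ^ (2 ^ i + 1)"
  shows "x = y"
proof (cases "y = 0")
  case True
  hence "x ^ (2 ^ i + 1) = 0" using assms(3) by simp
  thus ?thesis using True by simp
next
  case False
  define u where "u = x / y"
  have "u ^ (2 ^ i + 1) = x ^ (2 ^ i + 1) / y ^ (2 ^ i + 1)" unfolding u_def by (simp add: power_divide)
  hence u1: "u ^ (2 ^ i + 1) = 1" using assms(3) False by simp
  hence unz: "u \<noteq> 0" by (auto simp: power_0_left)
  have "u ^ (2 ^ i) * u = 1" using u1 by (simp add: mult.commute)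
  hence ui: "u ^ (2 ^ i) = inverse u" using unz by (simp add: field_simps)
  have "u ^ (2 ^ (i + i)) = (u ^ (2 ^ i)) ^ (2 ^ i)" by (simp add: pp)
  also have "\<dots> = inverse (u ^ (2 ^ i))" by (simp add: ui power_inverse)
  also have "\<dots> = u" by (simp add: ui)
  finally have "u ^ (2 ^ (2 * i)) = u" by (simp add: mult_2)
  hence "u ^ 2 = u" using fixed_coprime[OF assms(1)] assms(2) by simp
  hence "u = 1" using unz sq_self_01 by blast
  thus ?thesis unfolding u_def using False by simp
qed

end

locale kas = gf2n n ty for n and ty :: "'a::{field,finite} itself" +
  fixes i s :: nat and F :: "'a \<Rightarrow> 'a"
  assumes n_odd: "odd n" and i_pos: "0 < i" and i_lt: "i < n"
    and cop_i: "coprime i n" and cop_2i: "coprime (2 * i) n"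
    and F_eq: "\<And>w. F w + F w ^ (2 ^ i) = w ^ (2 ^ i) + w ^ (2 ^ (i - 1))"
    and Tr_F: "\<And>w. Tr n (F w) = Tr n w"
    and T1: "\<And>z::'a. z \<noteq> 0 \<Longrightarrow> Tr n (((F (z ^ 3) + 1) / z ^ (2 ^ i + 1)) ^ (2 ^ i + 1)) = 0"
    and s_prop: "\<And>u::'a. Tr n ((u ^ (2 ^ i + 1)) ^ s) = Tr n (u ^ 3)"
begin

definition P :: "'a \<Rightarrow> 'a \<Rightarrow> 'a" where
  "P a y = y ^ 3 + a * y ^ (2 ^ i + 1)"

definition W :: "'a \<Rightarrow> int" where
  "W a = (\<Sum>y\<in>UNIV. chi (P a y))"

definition ell :: "'a \<Rightarrow> 'a \<Rightarrow> 'a" where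
  "ell a z = z ^ (2 ^ (n - 1)) + z ^ 2 + (a * z) ^ (2 ^ (n - i)) + a * z ^ (2 ^ i)"

definition Nr :: "'a \<Rightarrow> int" where
  "Nr a = (\<Sum>z\<in>{z. ell a z = 0}. chi (P a z))"

definition A :: "'a \<Rightarrow> int" where
  "A l = (\<Sum>x\<in>UNIV. chi ((x + l) ^ s + x ^ s))"

lemma add_eq0_iff2: "(a::'a) + b = 0 \<longleftrightarrow> a = b"
proof
  assume "a + b = 0"
  hence "a + b = b + b" using add_self[of b] by simp
  thus "a = b" by (rule add_right_imp_eq)
next
  assume "a = b" thus "a + b = 0" using add_self by simp
qed

lemma three_one: "(3::'a) = 1"
proof -
  have "(3::'a) = 2 + 1" by simp
  thus ?thesis using two_zero by simp
qed

lemma P_add: "P a (u + z) = P a u + P a z +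
   (u ^ 2 * z + u * z ^ 2 + a * u ^ (2 ^ i) * z + a * u * z ^ (2 ^ i))"
proof -
  have c: "(u + z) ^ 3 = u ^ 3 + z ^ 3 + 3 * (u ^ 2 * z + u * z ^ 2)"
    by (simp add: power3_eq_cube power2_eq_square algebra_simps)
  have e: "(u + z) ^ (2 ^ i + 1) = (u ^ (2 ^ i) + z ^ (2 ^ i)) * (u + z)"
    by (simp add: frob_add)
  show ?thesis unfolding P_def c e three_one by (simp add: algebra_simps)
qed

lemma chi_c1: "chi (u ^ 2 * z) = chi (u * z ^ (2 ^ (n - 1)))"
proof -
  have "(u * z ^ (2 ^ (n - 1))) ^ 2 = u ^ 2 * (z ^ (2 ^ (n - 1))) ^ (2 ^ 1)"
    by (simp add: power_mult_distrib)
  also have "(z ^ (2 ^ (n - 1))) ^ (2 ^ 1) = z ^ (2 ^ (n - 1 + 1))"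
    by (rule pp)
  also have "n - 1 + 1 = n" using n_pos by simp
  finally have "(u * z ^ (2 ^ (n - 1))) ^ 2 = u ^ 2 * z" using pow_q by simp
  thus ?thesis using chi_sq_arg[of "u * z ^ (2 ^ (n - 1))"] by simp
qed

lemma chi_c2: "chi (a * u ^ (2 ^ i) * z) = chi (u * (a * z) ^ (2 ^ (n - i)))"
proof -
  have "(u * (a * z) ^ (2 ^ (n - i))) ^ (2 ^ i) = u ^ (2 ^ i) * ((a * z) ^ (2 ^ (n - i))) ^ (2 ^ i)"
    by (simp add: power_mult_distrib)
  also have "((a * z) ^ (2 ^ (n - i))) ^ (2 ^ i) = (a * z) ^ (2 ^ n)"
    using i_lt by (simp add: pp)
  finally have "(u * (a * z) ^ (2 ^ (n - i))) ^ (2 ^ i) = a * u ^ (2 ^ i) * z"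
    using pow_q by (simp add: algebra_simps)
  thus ?thesis using chi_frob[of "u * (a * z) ^ (2 ^ (n - i))" i] by simp
qed

lemma chi_P_add: "chi (P a (u + z)) = chi (P a u) * chi (P a z) * chi (u * ell a z)"
proof -
  have "chi (u * ell a z) = chi (u ^ 2 * z) * chi (u * z ^ 2) * chi (a * u ^ (2 ^ i) * z) * chi (a * u * z ^ (2 ^ i))"
    unfolding ell_def chi_c1 chi_c2 by (simp add: algebra_simps chi_add)
  thus ?thesis unfolding P_add by (simp add: chi_add)
qed

lemma sum_if_eq: "(\<Sum>x\<in>(UNIV::'a set). if x = c then f x else 0) = (f c :: int)"
  by (simp add: sum.delta)

lemma W2: "(W a) ^ 2 = int CARD('a) * Nr a"
proof -
  have "(W a) ^ 2 = (\<Sum>u\<in>UNIV. \<Sum>v\<in>UNIV. chi (P a u) * chi (P a v))"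
    unfolding W_def power2_eq_square by (simp add: sum_product)
  also have "\<dots> = (\<Sum>u\<in>UNIV. \<Sum>z\<in>UNIV. chi (P a u) * chi (P a (u + z)))"
  proof (rule sum.cong[OF refl])
    fix u :: 'a
    have inj: "inj (\<lambda>z. u + z)" by (auto simp: inj_on_def)
    show "(\<Sum>v\<in>UNIV. chi (P a u) * chi (P a v)) = (\<Sum>z\<in>UNIV. chi (P a u) * chi (P a (u + z)))"
      using sum_inj_UNIV[OF inj, of "\<lambda>v. chi (P a u) * chi (P a v)"] by simp
  qed
  also have "\<dots> = (\<Sum>u\<in>UNIV. \<Sum>z\<in>UNIV. chi (P a z) * chi (ell a z * u))"
  proof (intro sum.cong refl)
    fix u z
    have "chi (P a u) * chi (P a (u + z)) = (chi (P a u) * chi (P a u)) * chi (P a z) * chi (u * ell a z)"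
      unfolding chi_P_add by (simp add: algebra_simps)
    thus "chi (P a u) * chi (P a (u + z)) = chi (P a z) * chi (ell a z * u)"
      by (simp add: mult.commute)
  qed
  also have "\<dots> = (\<Sum>z\<in>UNIV. chi (P a z) * (\<Sum>u\<in>UNIV. chi (ell a z * u)))"
    by (subst sum.swap) (simp add: sum_distrib_left)
  also have "\<dots> = (\<Sum>z\<in>UNIV. if ell a z = 0 then int CARD('a) * chi (P a z) else 0)"
    by (intro sum.cong refl) (simp add: chi_sum)
  also have "\<dots> = int CARD('a) * Nr a"
    unfolding Nr_def by (simp add: sum.If_cases sum_distrib_left)
  finally show ?thesis .
qed

lemma gold_inj': "inj (\<lambda>u::'a. u ^ (2 ^ i + 1))"
  unfolding inj_def using gold_inj[OF cop_2i i_pos] by blast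

lemma A_formula: "int CARD('a) * A l = (\<Sum>a\<in>UNIV. chi (a * l) * (W a) ^ 2)"
proof -
  let ?q = "int CARD('a)"
  let ?e = "2 ^ i + 1"
  have "(\<Sum>a\<in>UNIV. chi (a * l) * (W a) ^ 2)
      = (\<Sum>a\<in>UNIV. \<Sum>u\<in>UNIV. \<Sum>v\<in>UNIV. chi (u ^ 3 + v ^ 3) * chi ((u ^ ?e + v ^ ?e + l) * a))"
  proof (rule sum.cong[OF refl])
    fix a
    have "(W a) ^ 2 = (\<Sum>u\<in>UNIV. \<Sum>v\<in>UNIV. chi (P a u) * chi (P a v))"
      unfolding W_def power2_eq_square by (simp add: sum_product)
    hence "chi (a * l) * (W a) ^ 2 = (\<Sum>u\<in>UNIV. \<Sum>v\<in>UNIV. chi (a * l) * (chi (P a u) * chi (P a v)))"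
      by (simp add: sum_distrib_left)
    also have "\<dots> = (\<Sum>u\<in>UNIV. \<Sum>v\<in>UNIV. chi (u ^ 3 + v ^ 3) * chi ((u ^ ?e + v ^ ?e + l) * a))"
    proof (intro sum.cong refl)
      fix u v
      have "chi (a * l) * (chi (P a u) * chi (P a v)) = chi (a * l + P a u + P a v)"
        by (simp add: chi_add)
      also have "a * l + P a u + P a v = (u ^ 3 + v ^ 3) + (u ^ ?e + v ^ ?e + l) * a"
        unfolding P_def by (simp add: algebra_simps)
      finally show "chi (a * l) * (chi (P a u) * chi (P a v)) = chi (u ^ 3 + v ^ 3) * chi ((u ^ ?e + v ^ ?e + l) * a)"
        by (simp add: chi_add)
    qed
    finally show "chi (a * l) * (W a) ^ 2 = (\<Sum>u\<in>UNIV. \<Sum>v\<in>UNIV. chi (u ^ 3 + v ^ 3) * chi ((u ^ ?e + v ^ ?e + l) * a))" .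
  qed
  also have "\<dots> = (\<Sum>u\<in>UNIV. \<Sum>v\<in>UNIV. chi (u ^ 3 + v ^ 3) * (\<Sum>a\<in>UNIV. chi ((u ^ ?e + v ^ ?e + l) * a)))"
  proof -
    have "(\<Sum>a\<in>UNIV. \<Sum>u\<in>UNIV. \<Sum>v\<in>UNIV. chi (u ^ 3 + v ^ 3) * chi ((u ^ ?e + v ^ ?e + l) * a))
        = (\<Sum>u\<in>UNIV. \<Sum>a\<in>UNIV. \<Sum>v\<in>UNIV. chi (u ^ 3 + v ^ 3) * chi ((u ^ ?e + v ^ ?e + l) * a))"
      by (rule sum.swap)
    also have "\<dots> = (\<Sum>u\<in>UNIV. \<Sum>v\<in>UNIV. \<Sum>a\<in>UNIV. chi (u ^ 3 + v ^ 3) * chi ((u ^ ?e + v ^ ?e + l) * a))"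
      by (rule sum.cong[OF refl], rule sum.swap)
    finally show ?thesis by (simp add: sum_distrib_left)
  qed
  also have "\<dots> = (\<Sum>u\<in>UNIV. \<Sum>v\<in>UNIV. if u ^ ?e + v ^ ?e + l = 0 then ?q * chi (u ^ 3 + v ^ 3) else 0)"
    by (intro sum.cong refl) (simp add: chi_sum)
  also have "\<dots> = (\<Sum>u\<in>UNIV. \<Sum>v\<in>UNIV. if u ^ ?e + v ^ ?e + l = 0 then ?q * chi ((u ^ ?e) ^ s + (v ^ ?e) ^ s) else 0)"
  proof (intro sum.cong refl)
    fix u v :: 'a
    have cu: "chi ((u ^ ?e) ^ s) = chi (u ^ 3)" unfolding chi_alt using s_prop[of u] by simp
    have cv: "chi ((v ^ ?e) ^ s) = chi (v ^ 3)" unfolding chi_alt using s_prop[of v] by simp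
    have "chi (u ^ 3 + v ^ 3) = chi ((u ^ ?e) ^ s + (v ^ ?e) ^ s)"
      by (simp only: chi_add cu cv)
    thus "(if u ^ ?e + v ^ ?e + l = 0 then ?q * chi (u ^ 3 + v ^ 3) else 0) =
          (if u ^ ?e + v ^ ?e + l = 0 then ?q * chi ((u ^ ?e) ^ s + (v ^ ?e) ^ s) else 0)" by simp
  qed
  also have "\<dots> = (\<Sum>x\<in>UNIV. \<Sum>w\<in>UNIV. if x + w + l = 0 then ?q * chi (x ^ s + w ^ s) else 0)"
  proof -
    have "(\<Sum>u\<in>UNIV. \<Sum>v\<in>UNIV. if u ^ ?e + v ^ ?e + l = 0 then ?q * chi ((u ^ ?e) ^ s + (v ^ ?e) ^ s) else 0)
        = (\<Sum>u\<in>UNIV. \<Sum>w\<in>UNIV. if u ^ ?e + w + l = 0 then ?q * chi ((u ^ ?e) ^ s + w ^ s) else 0)"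
    proof (rule sum.cong[OF refl])
      fix u :: 'a
      show "(\<Sum>v\<in>UNIV. if u ^ ?e + v ^ ?e + l = 0 then ?q * chi ((u ^ ?e) ^ s + (v ^ ?e) ^ s) else 0)
          = (\<Sum>w\<in>UNIV. if u ^ ?e + w + l = 0 then ?q * chi ((u ^ ?e) ^ s + w ^ s) else 0)"
        by (rule sum_inj_UNIV[OF gold_inj', of "\<lambda>w. if u ^ ?e + w + l = 0 then ?q * chi ((u ^ ?e) ^ s + w ^ s) else 0"])
    qed
    also have "\<dots> = (\<Sum>x\<in>UNIV. \<Sum>w\<in>UNIV. if x + w + l = 0 then ?q * chi (x ^ s + w ^ s) else 0)"
      by (rule sum_inj_UNIV[OF gold_inj', of "\<lambda>x. \<Sum>w\<in>UNIV. if x + w + l = 0 then ?q * chi (x ^ s + w ^ s) else 0"])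
    finally show ?thesis .
  qed
  also have "\<dots> = (\<Sum>x\<in>UNIV. ?q * chi (x ^ s + (x + l) ^ s))"
  proof (intro sum.cong refl)
    fix x :: 'a
    have eqv: "\<And>w. (x + w + l = 0) = (w = x + l)"
    proof -
      fix w :: 'a
      have "x + w + l = w + (x + l)" by (simp add: algebra_simps)
      thus "(x + w + l = 0) = (w = x + l)" by (simp only: add_eq0_iff2)
    qed
    have "(\<Sum>w\<in>UNIV. if x + w + l = 0 then ?q * chi (x ^ s + w ^ s) else 0)
         = (\<Sum>w\<in>UNIV. if w = x + l then ?q * chi (x ^ s + w ^ s) else 0)" by (simp only: eqv)
    also have "\<dots> = ?q * chi (x ^ s + (x + l) ^ s)"
      by (rule sum_if_eq[of "x + l" "\<lambda>w. ?q * chi (x ^ s + w ^ s)"])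
    finally show "(\<Sum>w\<in>UNIV. if x + w + l = 0 then ?q * chi (x ^ s + w ^ s) else 0) = ?q * chi (x ^ s + (x + l) ^ s)" .
  qed
  also have "\<dots> = ?q * A l"
    unfolding A_def sum_distrib_left by (simp only: add.commute)
  finally show ?thesis by (rule sym)
qed

end

context gf2n
begin

lemma sq_fixed_all: "(x::'a) ^ 2 = x \<Longrightarrow> x ^ (2 ^ k) = x"
proof (induction k)
  case 0 thus ?case by simp
next
  case (Suc k)
  have "x ^ (2 ^ Suc k) = (x ^ (2 ^ k)) ^ 2" by (simp add: power_mult[symmetric] mult.commute)
  thus ?case using Suc by simp
qed

end

context kas
begin

abbreviation e :: nat where "e \<equiv> 2 ^ i + 1"

lemma sum_filter_UNIV: "(\<Sum>x\<in>{x::'a. Q x}. (f x::int)) = (\<Sum>x\<in>UNIV. if Q x then f x else 0)"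
  by (simp add: sum.If_cases)

lemma ell_0: "ell a 0 = 0"
  unfolding ell_def using i_lt by (simp add: power_0_left)

lemma P_0: "P a 0 = 0"
  unfolding P_def by (simp add: power_0_left)

lemma h_eq: "(2::nat) ^ i = 2 * 2 ^ (i - 1)"
  using i_pos by (metis Suc_diff_1 power_Suc)

lemma key_ell:
  "z ^ (2 ^ i) * (ell a z) ^ (2 ^ i)
     = (z ^ 3) ^ (2 ^ (i - 1)) + (z ^ 3) ^ (2 ^ i) + a * z ^ e + (a * z ^ e) ^ (2 ^ i)"
proof -
  define h where "h = (2::nat) ^ (i - 1)"
  have t: "(2::nat) ^ i = 2 * h" unfolding h_def by (rule h_eq)
  have t1: "(z ^ (2 ^ (n - 1))) ^ (2 ^ i) = z ^ h"
  proof -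
    have "(z ^ (2 ^ (n - 1))) ^ (2 ^ i) = z ^ (2 ^ (n - 1 + i))" by (rule pp)
    also have "n - 1 + i = n * 1 + (i - 1)" using i_pos n_pos by simp
    also have "z ^ (2 ^ (n * 1 + (i - 1))) = z ^ (2 ^ (i - 1))" by (rule pow_pow2_mult)
    finally show ?thesis unfolding h_def .
  qed
  have t3: "((a * z) ^ (2 ^ (n - i))) ^ (2 ^ i) = a * z"
  proof -
    have "((a * z) ^ (2 ^ (n - i))) ^ (2 ^ i) = (a * z) ^ (2 ^ (n - i + i))" by (rule pp)
    also have "n - i + i = n" using i_lt by simp
    finally show ?thesis using pow_q by simp
  qed
  have "(ell a z) ^ (2 ^ i) = (z ^ (2 ^ (n - 1))) ^ (2 ^ i) + (z ^ 2) ^ (2 ^ i)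
        + ((a * z) ^ (2 ^ (n - i))) ^ (2 ^ i) + (a * z ^ (2 ^ i)) ^ (2 ^ i)"
    unfolding ell_def by (simp only: frob_add)
  also have "\<dots> = z ^ h + (z ^ 2) ^ (2 * h) + a * z + (a * z ^ (2 * h)) ^ (2 * h)"
    by (simp only: t1 t3, simp only: t)
  finally have el: "(ell a z) ^ (2 ^ i) = z ^ h + (z ^ 2) ^ (2 * h) + a * z + (a * z ^ (2 * h)) ^ (2 * h)" .
  have e1: "z ^ (2 * h) * z ^ h = (z ^ 3) ^ h"
    by (simp add: power_add[symmetric] power_mult[symmetric])
  have e2: "z ^ (2 * h) * (z ^ 2) ^ (2 * h) = (z ^ 3) ^ (2 * h)"
    by (simp add: power_add[symmetric] power_mult[symmetric])
  have e3: "z ^ (2 * h) * (a * z) = a * z ^ (2 * h + 1)"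
    by (simp add: power_add algebra_simps)
  have e4: "z ^ (2 * h) * (a * z ^ (2 * h)) ^ (2 * h) = (a * z ^ (2 * h + 1)) ^ (2 * h)"
  proof -
    have "(a * z ^ (2 * h + 1)) ^ (2 * h) = a ^ (2 * h) * z ^ ((2 * h + 1) * (2 * h))"
      by (simp only: power_mult_distrib power_mult)
    also have "(2 * h + 1) * (2 * h) = 2 * h + (2 * h) * (2 * h)" by (simp add: algebra_simps)
    finally have r: "(a * z ^ (2 * h + 1)) ^ (2 * h) = a ^ (2 * h) * z ^ (2 * h + (2 * h) * (2 * h))" .
    have l: "(a * z ^ (2 * h)) ^ (2 * h) = a ^ (2 * h) * z ^ ((2 * h) * (2 * h))"
      by (simp only: power_mult_distrib power_mult)
    have pa: "z ^ (2 * h + (2 * h) * (2 * h)) = z ^ (2 * h) * z ^ ((2 * h) * (2 * h))"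
      by (rule power_add)
    show ?thesis unfolding r l pa by (simp only: mult_ac)
  qed
  have "z ^ (2 ^ i) * (ell a z) ^ (2 ^ i)
      = z ^ (2 * h) * z ^ h + z ^ (2 * h) * (z ^ 2) ^ (2 * h) + z ^ (2 * h) * (a * z)
        + z ^ (2 * h) * (a * z ^ (2 * h)) ^ (2 * h)"
    unfolding el by (simp add: t algebra_simps)
  also have "\<dots> = (z ^ 3) ^ h + (z ^ 3) ^ (2 * h) + a * z ^ (2 * h + 1) + (a * z ^ (2 * h + 1)) ^ (2 * h)"
    unfolding e1 e2 e3 e4 ..
  finally show ?thesis unfolding t h_def .
qed

lemma ell_iff:
  assumes z: "z \<noteq> 0"
  shows "ell a z = 0 \<longleftrightarrow> (a * z ^ e = F (z ^ 3) \<or> a * z ^ e = F (z ^ 3) + 1)"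
proof -
  define v where "v = a * z ^ e"
  define w where "w = z ^ 3"
  have "ell a z = 0 \<longleftrightarrow> z ^ (2 ^ i) * (ell a z) ^ (2 ^ i) = 0" using z by simp
  also have "z ^ (2 ^ i) * (ell a z) ^ (2 ^ i) = (v + F w) + (v + F w) ^ (2 ^ i)"
  proof -
    have "z ^ (2 ^ i) * (ell a z) ^ (2 ^ i) = (w ^ (2 ^ i) + w ^ (2 ^ (i - 1))) + v + v ^ (2 ^ i)"
      unfolding key_ell v_def w_def by (simp add: algebra_simps)
    also have "w ^ (2 ^ i) + w ^ (2 ^ (i - 1)) = F w + F w ^ (2 ^ i)" by (rule F_eq[symmetric])
    finally show ?thesis by (simp add: frob_add algebra_simps)
  qed
  also have "((v + F w) + (v + F w) ^ (2 ^ i) = 0) \<longleftrightarrow> (v + F w) ^ 2 = v + F w"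
  proof
    assume "(v + F w) + (v + F w) ^ (2 ^ i) = 0"
    hence "(v + F w) ^ (2 ^ i) = v + F w" using add_eq0_iff2 by metis
    thus "(v + F w) ^ 2 = v + F w" using fixed_coprime[OF cop_i i_pos] by blast
  next
    assume "(v + F w) ^ 2 = v + F w"
    hence h2: "(v + F w) ^ (2 ^ i) = v + F w" by (rule sq_fixed_all)
    show "(v + F w) + (v + F w) ^ (2 ^ i) = 0" by (simp only: h2 add_self)
  qed
  also have "\<dots> \<longleftrightarrow> (v + F w = 0 \<or> v + F w = 1)"
    using sq_self_01 by auto
  also have "\<dots> \<longleftrightarrow> (v = F w \<or> v = F w + 1)"
  proof -
    have "v + F w = 1 \<longleftrightarrow> v = F w + 1"
    proof
      assume h: "v + F w = 1"
      have "v = v + (F w + F w)" by (simp only: add_self add_0_right)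
      also have "\<dots> = (v + F w) + F w" by (simp only: add.assoc)
      also have "\<dots> = F w + 1" by (simp only: h add.commute)
      finally show "v = F w + 1" .
    next
      assume h: "v = F w + 1"
      have "v + F w = 1 + (F w + F w)" by (simp only: h add_ac)
      also have "\<dots> = 1" by (simp only: add_self add_0_right)
      finally show "v + F w = 1" .
    qed
    thus ?thesis using add_eq0_iff2 by blast
  qed
  finally show ?thesis unfolding v_def w_def .
qed

definition a0 :: "'a \<Rightarrow> 'a" where "a0 z = F (z ^ 3) / z ^ e"
definition a1 :: "'a \<Rightarrow> 'a" where "a1 z = (F (z ^ 3) + 1) / z ^ e"

lemma rad_set:
  assumes z: "z \<noteq> 0"
  shows "{a. ell a z = 0} = {a0 z, a1 z}"
proof -
  have ze: "z ^ e \<noteq> 0" using z by simp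
  have "\<And>a c. (a * z ^ e = c) = (a = c / z ^ e)" using ze by (auto simp: field_simps)
  thus ?thesis unfolding a0_def a1_def using ell_iff[OF z] by auto
qed

lemma a01_ne: "z \<noteq> 0 \<Longrightarrow> a0 z \<noteq> a1 z"
  unfolding a0_def a1_def by (simp add: divide_inverse)

lemma chi_P_a0: "z \<noteq> 0 \<Longrightarrow> chi (P (a0 z) z) = 1"
proof -
  assume z: "z \<noteq> 0"
  have "P (a0 z) z = z ^ 3 + F (z ^ 3)" unfolding P_def a0_def using z by simp
  moreover have "chi (F (z ^ 3)) = chi (z ^ 3)" unfolding chi_alt using Tr_F by simp
  ultimately show ?thesis by (simp add: chi_add)
qed

lemma chi_P_a1: "z \<noteq> 0 \<Longrightarrow> chi (P (a1 z) z) = -1"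
proof -
  assume z: "z \<noteq> 0"
  have "P (a1 z) z = (z ^ 3 + F (z ^ 3)) + 1" unfolding P_def a1_def using z by (simp add: add.assoc)
  moreover have "chi (F (z ^ 3)) = chi (z ^ 3)" unfolding chi_alt using Tr_F by simp
  ultimately show ?thesis by (simp add: chi_add chi_one[OF n_odd])
qed

lemma sum_Nr: "(\<Sum>a\<in>UNIV. Nr a) = int CARD('a)"
proof -
  have "(\<Sum>a\<in>UNIV. Nr a) = (\<Sum>a\<in>UNIV. \<Sum>z\<in>UNIV. if ell a z = 0 then chi (P a z) else 0)"
    unfolding Nr_def by (simp only: sum_filter_UNIV)
  also have "\<dots> = (\<Sum>z\<in>UNIV. \<Sum>a\<in>UNIV. if ell a z = 0 then chi (P a z) else 0)"
    by (rule sum.swap)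
  also have "\<dots> = (\<Sum>z::'a\<in>UNIV. if z = 0 then int CARD('a) else 0)"
  proof (rule sum.cong[OF refl])
    fix z :: 'a
    show "(\<Sum>a\<in>UNIV. if ell a z = 0 then chi (P a z) else 0) = (if z = 0 then int CARD('a) else 0)"
    proof (cases "z = 0")
      case True thus ?thesis by (simp add: ell_0 P_0)
    next
      case False
      have "(\<Sum>a\<in>UNIV. if ell a z = 0 then chi (P a z) else 0) = (\<Sum>a\<in>{a. ell a z = 0}. chi (P a z))"
        by (simp only: sum_filter_UNIV)
      also have "\<dots> = chi (P (a0 z) z) + chi (P (a1 z) z)"
        unfolding rad_set[OF False] using a01_ne[OF False] by simp
      also have "\<dots> = 0" using chi_P_a0[OF False] chi_P_a1[OF False] by simp
      finally show ?thesis using False by simp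
    qed
  qed
  also have "\<dots> = int CARD('a)" by (rule sum_if_eq[of 0 "\<lambda>_. int CARD('a)"])
  finally show ?thesis .
qed

lemma q_int: "int CARD('a) = 2 ^ n" using card by simp

lemma Nr_nonneg: "0 \<le> Nr a"
proof -
  have "0 \<le> (W a) ^ 2" by simp
  hence "0 \<le> int CARD('a) * Nr a" using W2 by simp
  moreover have "0 < int CARD('a)" by simp
  ultimately show ?thesis by (simp add: zero_le_mult_iff)
qed

lemma Nr_ne1: "Nr a \<noteq> 1"
proof
  assume "Nr a = 1"
  hence "(W a) ^ 2 = 2 ^ n" using W2 q_int by simp
  moreover obtain k where "n = 2 * k + 1" using n_odd by (metis oddE)
  ultimately show False using int_sq_ne_pow2_odd by metis
qed

lemma Nr_E:
  assumes aE: "Tr n (a ^ e) \<noteq> 0"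
  shows "2 \<le> Nr a"
proof -
  let ?R = "{z. ell a z = 0}"
  have one: "chi (P a z) = 1" if zR: "z \<in> ?R" for z
  proof (cases "z = 0")
    case True thus ?thesis by (simp add: P_0)
  next
    case False
    have "a \<in> {a0 z, a1 z}" using zR rad_set[OF False] by blast
    moreover have "a \<noteq> a1 z"
    proof
      assume "a = a1 z"
      hence "Tr n (a ^ e) = 0" using T1[OF False] unfolding a1_def by simp
      thus False using aE by simp
    qed
    ultimately have "a = a0 z" by blast
    thus ?thesis using chi_P_a0[OF False] by simp
  qed
  have "Nr a = (\<Sum>z\<in>?R. 1)" unfolding Nr_def using one by (intro sum.cong refl) auto
  also have "\<dots> = int (card ?R)" by simp
  finally have nr: "Nr a = int (card ?R)" .
  have "0 \<in> ?R" by (simp add: ell_0)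
  hence "card ?R > 0" by (auto simp: card_gt_0_iff)
  hence "1 \<le> Nr a" using nr by simp
  thus ?thesis using Nr_ne1[of a] by simp
qed

lemma card_E: "2 * int (card {a::'a. Tr n (a ^ e) \<noteq> 0}) = int CARD('a)"
proof -
  have "(\<Sum>a\<in>UNIV. chi (a ^ e)) = (\<Sum>a\<in>UNIV. chi a)"
    by (rule sum_inj_UNIV[OF gold_inj', of chi])
  hence z: "(\<Sum>a\<in>UNIV. chi (a ^ e)) = 0" using chi_sum_id by simp
  have "(\<Sum>a\<in>UNIV. chi (a ^ e)) = (\<Sum>a::'a\<in>UNIV. 1 - 2 * of_bool (Tr n (a ^ e) \<noteq> 0))"
    by (intro sum.cong refl) (simp add: chi_alt)
  also have "\<dots> = int CARD('a) - 2 * (\<Sum>a::'a\<in>UNIV. of_bool (Tr n (a ^ e) \<noteq> 0))"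
    by (simp add: sum_subtractf sum_distrib_left)
  also have "(\<Sum>a::'a\<in>UNIV. (of_bool (Tr n (a ^ e) \<noteq> 0) :: int)) = int (card {a::'a. Tr n (a ^ e) \<noteq> 0})"
    by simp
  finally show ?thesis using z by simp
qed

lemma Nr_val: "Nr a = (if Tr n (a ^ e) \<noteq> 0 then 2 else 0)"
proof -
  define g where "g a = Nr a - (if Tr n (a ^ e) \<noteq> 0 then 2 else 0)" for a
  have gnn: "\<forall>a\<in>UNIV. 0 \<le> g a"
    unfolding g_def using Nr_E Nr_nonneg by auto
  have "(\<Sum>a::'a\<in>UNIV. (if Tr n (a ^ e) \<noteq> 0 then 2 else 0 :: int)) = (\<Sum>a::'a\<in>UNIV. 2 * of_bool (Tr n (a ^ e) \<noteq> 0))"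
    by (intro sum.cong refl) simp
  also have "\<dots> = 2 * int (card {a::'a. Tr n (a ^ e) \<noteq> 0})"
    by (simp add: sum_distrib_left[symmetric])
  finally have s2: "(\<Sum>a::'a\<in>UNIV. (if Tr n (a ^ e) \<noteq> 0 then 2 else 0 :: int)) = int CARD('a)"
    using card_E by simp
  have "(\<Sum>a\<in>UNIV. g a) = 0"
    unfolding g_def using sum_Nr s2 by (simp add: sum_subtractf)
  hence "\<forall>a\<in>UNIV. g a = 0" using sum_nonneg_eq_0_iff[of "UNIV::'a set" g] gnn by simp
  thus ?thesis unfolding g_def by auto
qed

lemma A_val: "A l = (\<Sum>a\<in>UNIV. if Tr n (a ^ e) \<noteq> 0 then 2 * chi (a * l) else 0)"
proof -
  have "int CARD('a) * A l = (\<Sum>a\<in>UNIV. chi (a * l) * (W a) ^ 2)" by (rule A_formula)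
  also have "\<dots> = int CARD('a) * (\<Sum>a\<in>UNIV. chi (a * l) * Nr a)"
    by (simp add: W2 sum_distrib_left algebra_simps)
  finally have "A l = (\<Sum>a\<in>UNIV. chi (a * l) * Nr a)" by simp
  also have "\<dots> = (\<Sum>a\<in>UNIV. if Tr n (a ^ e) \<noteq> 0 then 2 * chi (a * l) else 0)"
    by (intro sum.cong refl) (simp add: Nr_val)
  finally show ?thesis .
qed

end

context gf2n
begin

lemma walsh_chi: "walsh n f \<mu> = (\<Sum>x\<in>UNIV. (if f x then -1 else 1) * chi (\<mu> * x))"
  unfolding walsh_def chi_def by (intro sum.cong refl) (simp add: power_add)

lemma sum_fiber:
  fixes S :: "'a set" and g :: "'a \<Rightarrow> 'a" and \<phi> :: "'a \<Rightarrow> int"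
  shows "(\<Sum>x\<in>S. \<phi> (g x)) = (\<Sum>y\<in>UNIV. int (card {x\<in>S. g x = y}) * \<phi> y)"
proof -
  have "(\<Sum>x\<in>S. \<phi> (g x)) = (\<Sum>x\<in>S. \<Sum>y\<in>UNIV. if g x = y then \<phi> y else 0)"
    by (intro sum.cong refl) (simp add: sum.delta)
  also have "\<dots> = (\<Sum>y\<in>UNIV. \<Sum>x\<in>S. if g x = y then \<phi> y else 0)"
    by (rule sum.swap)
  also have "\<dots> = (\<Sum>y\<in>UNIV. int (card {x\<in>S. g x = y}) * \<phi> y)"
  proof (rule sum.cong[OF refl])
    fix y
    have "(\<Sum>x\<in>S. if g x = y then \<phi> y else 0) = (\<Sum>x\<in>{x\<in>S. g x = y}. \<phi> y)"
      using sum.inter_filter[of S "\<lambda>x. \<phi> y" "\<lambda>x. g x = y"] by simp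
    thus "(\<Sum>x\<in>S. if g x = y then \<phi> y else 0) = int (card {x\<in>S. g x = y}) * \<phi> y" by simp
  qed
  finally show ?thesis .
qed

end

context kas
begin

definition D :: "'a \<Rightarrow> 'a" where "D x = (x + 1) ^ s + x ^ s"

lemma D_shift: "D (x + 1) = D x"
proof -
  have "x + 1 + 1 = x" by (simp add: add.assoc add_self)
  thus ?thesis unfolding D_def by (simp add: add.commute)
qed

lemma Tr_shift: "Tr n ((x::'a) + 1) \<noteq> 0 \<longleftrightarrow> Tr n x = 0"
  using Tr_add_cases[of x 1] Tr_one[OF n_odd] by auto

definition T0 :: "'a set" where "T0 = {x. Tr n x = 0}"

lemma split_half: "(\<Sum>x\<in>UNIV. (\<phi> (D x)::int)) = 2 * (\<Sum>x\<in>T0. \<phi> (D x))"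
proof -
  have "(\<Sum>x\<in>UNIV. \<phi> (D x)) = (\<Sum>x\<in>UNIV. (if Tr n x = 0 then \<phi> (D x) else 0)
        + (if Tr n x \<noteq> 0 then \<phi> (D x) else 0))"
    by (intro sum.cong refl) simp
  also have "\<dots> = (\<Sum>x\<in>UNIV. if Tr n x = 0 then \<phi> (D x) else 0)
        + (\<Sum>x\<in>UNIV. if Tr n x \<noteq> 0 then \<phi> (D x) else 0)"
    by (rule sum.distrib)
  also have "(\<Sum>x\<in>UNIV. if Tr n x \<noteq> 0 then \<phi> (D x) else 0)
           = (\<Sum>x\<in>UNIV. if Tr n (x + 1) \<noteq> 0 then \<phi> (D (x + 1)) else 0)"
  proof -
    have inj: "inj (\<lambda>x::'a. x + 1)" by (auto simp: inj_on_def)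
    show ?thesis using sum_inj_UNIV[OF inj, of "\<lambda>x. if Tr n x \<noteq> 0 then \<phi> (D x) else 0"] by simp
  qed
  also have "\<dots> = (\<Sum>x\<in>UNIV. if Tr n x = 0 then \<phi> (D x) else 0)"
    by (intro sum.cong refl) (simp add: Tr_shift D_shift)
  also have "(\<Sum>x\<in>UNIV. if Tr n x = 0 then \<phi> (D x) else 0) = (\<Sum>x\<in>T0. \<phi> (D x))"
    unfolding T0_def by (simp add: sum_filter_UNIV)
  finally show ?thesis by simp
qed

definition m :: "'a \<Rightarrow> int" where "m y = int (card {x\<in>T0. D x = y})"

lemma m_nonneg: "0 \<le> m y" unfolding m_def by simp

lemma sum_T0_m: "(\<Sum>x\<in>T0. \<phi> (D x)) = (\<Sum>y\<in>UNIV. m y * \<phi> y)"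
  unfolding m_def by (rule sum_fiber)

lemma G_A:
  assumes s0: "0 < s"
  shows "(\<Sum>x\<in>UNIV. chi (l ^ s * D x)) = A l"
proof (cases "l = 0")
  case True
  thus ?thesis unfolding A_def using s0 by (simp add: add_self power_0_left)
next
  case False
  have inj: "inj (\<lambda>x. l * x)" using False by (auto simp: inj_on_def)
  have "(\<Sum>x\<in>UNIV. chi (l ^ s * D x)) = (\<Sum>x\<in>UNIV. chi ((l * x + l) ^ s + (l * x) ^ s))"
  proof (rule sum.cong[OF refl])
    fix x
    have "l ^ s * D x = (l * x + l) ^ s + (l * x) ^ s"
      unfolding D_def by (simp only: distrib_left power_mult_distrib[symmetric] mult_1_right)
    thus "chi (l ^ s * D x) = chi ((l * x + l) ^ s + (l * x) ^ s)" by simp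
  qed
  also have "\<dots> = A l"
    unfolding A_def by (rule sum_inj_UNIV[OF inj, of "\<lambda>y. chi ((y + l) ^ s + y ^ s)"])
  finally show ?thesis .
qed

abbreviation EE :: "'a set" where "EE \<equiv> {a. Tr n (a ^ e) \<noteq> 0}"

lemma A_EE: "A l = 2 * (\<Sum>a\<in>EE. chi (a * l))"
proof -
  have "A l = (\<Sum>a\<in>UNIV. 2 * (if Tr n (a ^ e) \<noteq> 0 then chi (a * l) else 0))"
    unfolding A_val by (intro sum.cong refl) simp
  also have "\<dots> = 2 * (\<Sum>a\<in>UNIV. if Tr n (a ^ e) \<noteq> 0 then chi (a * l) else 0)"
    by (simp only: sum_distrib_left)
  also have "(\<Sum>a\<in>UNIV. if Tr n (a ^ e) \<noteq> 0 then chi (a * l) else 0) = (\<Sum>a\<in>EE. chi (a * l))"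
    by (simp only: sum_filter_UNIV)
  finally show ?thesis .
qed

lemma card_EE: "2 * int (card EE) = int CARD('a)" using card_E by simp

lemma sumsq_A: "(\<Sum>l\<in>UNIV. (A l) ^ 2) = 2 * int CARD('a) * int CARD('a)"
proof -
  have "(\<Sum>l\<in>UNIV. (A l) ^ 2) = (\<Sum>l\<in>UNIV. 4 * (\<Sum>a\<in>EE. \<Sum>b\<in>EE. chi ((a + b) * l)))"
  proof (rule sum.cong[OF refl])
    fix l
    have "(A l) ^ 2 = 4 * ((\<Sum>a\<in>EE. chi (a * l)) * (\<Sum>b\<in>EE. chi (b * l)))"
      unfolding A_EE power2_eq_square by simp
    also have "(\<Sum>a\<in>EE. chi (a * l)) * (\<Sum>b\<in>EE. chi (b * l)) = (\<Sum>a\<in>EE. \<Sum>b\<in>EE. chi ((a + b) * l))"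
      unfolding sum_product by (intro sum.cong refl) (simp add: chi_add[symmetric] distrib_right)
    finally show "(A l) ^ 2 = 4 * (\<Sum>a\<in>EE. \<Sum>b\<in>EE. chi ((a + b) * l))" .
  qed
  also have "\<dots> = 4 * (\<Sum>a\<in>EE. \<Sum>b\<in>EE. \<Sum>l\<in>UNIV. chi ((a + b) * l))"
  proof -
    have "(\<Sum>l\<in>UNIV. \<Sum>a\<in>EE. \<Sum>b\<in>EE. chi ((a + b) * l)) = (\<Sum>a\<in>EE. \<Sum>l\<in>UNIV. \<Sum>b\<in>EE. chi ((a + b) * l))"
      by (rule sum.swap)
    also have "\<dots> = (\<Sum>a\<in>EE. \<Sum>b\<in>EE. \<Sum>l\<in>UNIV. chi ((a + b) * l))"
      by (rule sum.cong[OF refl], rule sum.swap)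
    finally show ?thesis by (simp add: sum_distrib_left[symmetric])
  qed
  also have "\<dots> = 4 * (\<Sum>a\<in>EE. \<Sum>b\<in>EE. if b = a then int CARD('a) else 0)"
  proof -
    have "\<And>a b. (a::'a) + b = 0 \<longleftrightarrow> b = a" using add_eq0_iff2 by auto
    hence "\<And>a b. (\<Sum>l\<in>UNIV. chi ((a + b) * l)) = (if b = a then int CARD('a) else 0)"
      by (simp only: chi_sum)
    thus ?thesis by simp
  qed
  also have "\<dots> = 4 * (\<Sum>a\<in>EE. int CARD('a))"
    by (simp add: sum.delta)
  also have "\<dots> = 2 * int CARD('a) * int CARD('a)"
    using card_EE by simp
  finally show ?thesis .
qed

end

context kas
begin

lemma two_T0: "2 * int (card T0) = int CARD('a)"
  using split_half[of "\<lambda>_. 1"] by simp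

lemma sum_m: "(\<Sum>y\<in>UNIV. m y) = int (card T0)"
  using sum_T0_m[of "\<lambda>_. 1"] by simp

lemma G_m: "(\<Sum>x\<in>UNIV. chi (\<mu> * D x)) = 2 * (\<Sum>y\<in>UNIV. m y * chi (\<mu> * y))"
  using split_half[of "\<lambda>y. chi (\<mu> * y)"] sum_T0_m[of "\<lambda>y. chi (\<mu> * y)"] by simp

lemma sumsq_G: "(\<Sum>\<mu>\<in>UNIV. (\<Sum>x\<in>UNIV. chi (\<mu> * D x)) ^ 2) = 4 * int CARD('a) * (\<Sum>y\<in>UNIV. (m y) ^ 2)"
proof -
  have "(\<Sum>\<mu>\<in>UNIV. (\<Sum>x\<in>UNIV. chi (\<mu> * D x)) ^ 2)
      = (\<Sum>\<mu>\<in>UNIV. 4 * (\<Sum>y\<in>UNIV. \<Sum>y'\<in>UNIV. m y * m y' * chi ((y + y') * \<mu>)))"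
  proof (rule sum.cong[OF refl])
    fix \<mu> :: 'a
    have "(\<Sum>x\<in>UNIV. chi (\<mu> * D x)) ^ 2 = 4 * ((\<Sum>y\<in>UNIV. m y * chi (\<mu> * y)) * (\<Sum>y'\<in>UNIV. m y' * chi (\<mu> * y')))"
      unfolding G_m power2_eq_square by simp
    also have "(\<Sum>y\<in>UNIV. m y * chi (\<mu> * y)) * (\<Sum>y'\<in>UNIV. m y' * chi (\<mu> * y'))
             = (\<Sum>y\<in>UNIV. \<Sum>y'\<in>UNIV. m y * m y' * chi ((y + y') * \<mu>))"
      unfolding sum_product
    proof (intro sum.cong refl)
      fix y y' :: 'a
      have "chi ((y + y') * \<mu>) = chi (\<mu> * y) * chi (\<mu> * y')"
        by (simp add: chi_add[symmetric] algebra_simps)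
      thus "m y * chi (\<mu> * y) * (m y' * chi (\<mu> * y')) = m y * m y' * chi ((y + y') * \<mu>)"
        by simp
    qed
    finally show "(\<Sum>x\<in>UNIV. chi (\<mu> * D x)) ^ 2 = 4 * (\<Sum>y\<in>UNIV. \<Sum>y'\<in>UNIV. m y * m y' * chi ((y + y') * \<mu>))" .
  qed
  also have "\<dots> = 4 * (\<Sum>y\<in>UNIV. \<Sum>y'\<in>UNIV. \<Sum>\<mu>\<in>UNIV. m y * m y' * chi ((y + y') * \<mu>))"
  proof -
    have "(\<Sum>\<mu>\<in>UNIV. \<Sum>y\<in>UNIV. \<Sum>y'\<in>UNIV. m y * m y' * chi ((y + y') * \<mu>))
        = (\<Sum>y\<in>UNIV. \<Sum>\<mu>\<in>UNIV. \<Sum>y'\<in>UNIV. m y * m y' * chi ((y + y') * \<mu>))"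
      by (rule sum.swap)
    also have "\<dots> = (\<Sum>y\<in>UNIV. \<Sum>y'\<in>UNIV. \<Sum>\<mu>\<in>UNIV. m y * m y' * chi ((y + y') * \<mu>))"
      by (rule sum.cong[OF refl], rule sum.swap)
    finally show ?thesis by (simp add: sum_distrib_left[symmetric])
  qed
  also have "\<dots> = 4 * (\<Sum>y\<in>UNIV. \<Sum>y'\<in>UNIV. if y' = y then int CARD('a) * (m y * m y') else 0)"
  proof -
    have eq: "\<And>a b. (a::'a) + b = 0 \<longleftrightarrow> b = a" using add_eq0_iff2 by auto
    have "\<And>y y'. (\<Sum>\<mu>\<in>UNIV. m y * m y' * chi ((y + y') * \<mu>)) = (if y' = y then int CARD('a) * (m y * m y') else 0)"
    proof -
      fix y y' :: 'a
      have "(\<Sum>\<mu>\<in>UNIV. m y * m y' * chi ((y + y') * \<mu>)) = m y * m y' * (\<Sum>\<mu>\<in>UNIV. chi ((y + y') * \<mu>))"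
        by (simp only: sum_distrib_left)
      also have "\<dots> = m y * m y' * (if y + y' = 0 then int CARD('a) else 0)"
        by (simp only: chi_sum)
      finally show "(\<Sum>\<mu>\<in>UNIV. m y * m y' * chi ((y + y') * \<mu>)) = (if y' = y then int CARD('a) * (m y * m y') else 0)"
        by (simp add: eq)
    qed
    thus ?thesis by simp
  qed
  also have "\<dots> = 4 * (\<Sum>y\<in>UNIV. int CARD('a) * (m y * m y))"
    by (simp add: sum.delta)
  also have "\<dots> = 4 * int CARD('a) * (\<Sum>y\<in>UNIV. (m y) ^ 2)"
    by (simp add: sum_distrib_left power2_eq_square mult.assoc)
  finally show ?thesis .
qed

lemma m01:
  assumes sd: "\<And>x::'a. (x ^ d) ^ s = x" and s0: "0 < s"
  shows "m y = 0 \<or> m y = 1"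
proof -
  have inj: "inj (\<lambda>x::'a. x ^ d)"
  proof (rule injI)
    fix x y :: 'a assume "x ^ d = y ^ d"
    hence "(x ^ d) ^ s = (y ^ d) ^ s" by simp
    thus "x = y" using sd by simp
  qed
  have "(\<Sum>\<mu>\<in>UNIV. (\<Sum>x\<in>UNIV. chi (\<mu> * D x)) ^ 2) = (\<Sum>\<mu>\<in>UNIV. (A (\<mu> ^ d)) ^ 2)"
  proof (rule sum.cong[OF refl])
    fix \<mu> :: 'a
    have "(\<Sum>x\<in>UNIV. chi (\<mu> * D x)) = (\<Sum>x\<in>UNIV. chi ((\<mu> ^ d) ^ s * D x))" using sd by simp
    also have "\<dots> = A (\<mu> ^ d)" by (rule G_A[OF s0])
    finally show "(\<Sum>x\<in>UNIV. chi (\<mu> * D x)) ^ 2 = (A (\<mu> ^ d)) ^ 2" by simp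
  qed
  also have "\<dots> = (\<Sum>l\<in>UNIV. (A l) ^ 2)"
    by (rule sum_inj_UNIV[OF inj, of "\<lambda>l. (A l) ^ 2"])
  also have "\<dots> = 2 * int CARD('a) * int CARD('a)" by (rule sumsq_A)
  finally have "4 * int CARD('a) * (\<Sum>y\<in>UNIV. (m y) ^ 2) = 2 * int CARD('a) * int CARD('a)"
    using sumsq_G by simp
  hence s2: "2 * (\<Sum>y\<in>UNIV. (m y) ^ 2) = int CARD('a)" by simp
  have "(\<Sum>y\<in>UNIV. (m y) ^ 2 - m y) = 0"
    using s2 sum_m two_T0 by (simp add: sum_subtractf)
  moreover have "\<forall>y\<in>UNIV. 0 \<le> (m y) ^ 2 - m y"
  proof
    fix y
    have "0 \<le> m y" by (rule m_nonneg)
    hence "m y = 0 \<or> 1 \<le> m y" by linarith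
    thus "0 \<le> (m y) ^ 2 - m y"
    proof
      assume "1 \<le> m y"
      hence "m y * 1 \<le> m y * m y" using \<open>0 \<le> m y\<close> by (intro mult_left_mono) auto
      thus ?thesis by (simp add: power2_eq_square)
    qed simp
  qed
  ultimately have "\<forall>y\<in>UNIV. (m y) ^ 2 - m y = 0"
    using sum_nonneg_eq_0_iff[of "UNIV::'a set" "\<lambda>y. (m y) ^ 2 - m y"] by simp
  hence "m y * (m y - 1) = 0" by (simp add: power2_eq_square algebra_simps)
  thus ?thesis by simp
qed

lemma inB: "(y \<in> {D x | x. True}) \<longleftrightarrow> m y \<noteq> 0"
proof
  assume "y \<in> {D x | x. True}"
  then obtain x where x: "D x = y" by blast
  obtain x' where x': "x' \<in> T0" "D x' = y"
  proof (cases "Tr n x = 0")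
    case True thus ?thesis using that x unfolding T0_def by blast
  next
    case False
    hence "Tr n (x + 1) = 0" using Tr_shift[of "x + 1"] by (simp add: add.assoc add_self)
    thus ?thesis using that x D_shift unfolding T0_def by blast
  qed
  hence "x' \<in> {x\<in>T0. D x = y}" by simp
  hence "card {x\<in>T0. D x = y} > 0" by (auto simp: card_gt_0_iff)
  thus "m y \<noteq> 0" unfolding m_def by (metis gr_implies_not0 of_nat_eq_0_iff)
next
  assume "m y \<noteq> 0"
  hence "card {x\<in>T0. D x = y} \<noteq> 0" unfolding m_def by simp
  hence "{x\<in>T0. D x = y} \<noteq> {}" by (metis card.empty)
  then obtain x where "D x = y" by blast
  thus "y \<in> {D x | x. True}" by blast
qed

theorem kas_main:
  assumes sd: "\<And>x::'a. (x ^ d) ^ s = x" and s0: "0 < s" and d0: "0 < d"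
  shows "walsh n (charf {(x + 1) ^ s + x ^ s | x::'a. True}) \<mu>
           = walsh n (charf {x::'a. Tr n (x ^ (2 ^ i + 1)) = 1}) (\<mu> ^ d)
       \<and> walsh n (charf {x::'a. Tr n (x ^ (2 ^ i + 1)) = 1}) (\<mu> ^ d)
           = (\<Sum>x\<in>(UNIV::'a set). (-1::int) ^ of_bool (Tr_bit n (x ^ (2 ^ i + 1) + \<mu> ^ d * x)))"
proof
  let ?l = "\<mu> ^ d"
  have Bset: "{(x + 1) ^ s + x ^ s | x::'a. True} = {D x | x. True}" unfolding D_def by simp
  have mu0: "\<mu> = 0 \<longleftrightarrow> ?l = 0"
  proof
    assume "\<mu> = 0" thus "?l = 0" using d0 by simp
  next
    assume "?l = 0"
    hence "?l ^ s = 0" using s0 by simp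
    thus "\<mu> = 0" using sd by simp
  qed
  have Eset: "\<And>x::'a. (x \<in> {x::'a. Tr n (x ^ (2 ^ i + 1)) = 1}) \<longleftrightarrow> Tr n (x ^ e) \<noteq> 0"
    using Tr_01 by auto
  have lhs: "walsh n (charf {(x + 1) ^ s + x ^ s | x::'a. True}) \<mu>
        = (if \<mu> = 0 then int CARD('a) else 0) - A ?l"
  proof -
    have "walsh n (charf {(x + 1) ^ s + x ^ s | x::'a. True}) \<mu>
        = (\<Sum>y\<in>UNIV. (1 - 2 * m y) * chi (\<mu> * y))"
      unfolding walsh_chi Bset charf_def
    proof (rule sum.cong[OF refl])
      fix y
      show "(if y \<in> {D x |x. True} then - 1 else 1) * chi (\<mu> * y) = (1 - 2 * m y) * chi (\<mu> * y)"
        using inB[of y] m01[OF sd s0, of y] by auto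
    qed
    also have "\<dots> = (\<Sum>y\<in>UNIV. chi (\<mu> * y)) - 2 * (\<Sum>y\<in>UNIV. m y * chi (\<mu> * y))"
      by (simp add: algebra_simps sum_subtractf sum_distrib_left)
    also have "2 * (\<Sum>y\<in>UNIV. m y * chi (\<mu> * y)) = (\<Sum>x\<in>UNIV. chi (\<mu> * D x))"
      by (rule G_m[symmetric])
    also have "(\<Sum>x\<in>UNIV. chi (\<mu> * D x)) = A ?l"
    proof -
      have "(\<Sum>x\<in>UNIV. chi (\<mu> * D x)) = (\<Sum>x\<in>UNIV. chi (?l ^ s * D x))" using sd by simp
      thus ?thesis using G_A[OF s0] by simp
    qed
    finally show ?thesis by (simp add: chi_sum)
  qed
  have rhs: "walsh n (charf {x::'a. Tr n (x ^ (2 ^ i + 1)) = 1}) ?l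
        = (if ?l = 0 then int CARD('a) else 0) - A ?l"
  proof -
    have "walsh n (charf {x::'a. Tr n (x ^ (2 ^ i + 1)) = 1}) ?l
        = (\<Sum>x\<in>UNIV. chi (?l * x) - 2 * (if Tr n (x ^ e) \<noteq> 0 then chi (x * ?l) else 0))"
      unfolding walsh_chi charf_def
    proof (rule sum.cong[OF refl])
      fix x :: 'a
      show "(if x \<in> {x. Tr n (x ^ (2 ^ i + 1)) = 1} then - 1 else 1) * chi (?l * x)
          = chi (?l * x) - 2 * (if Tr n (x ^ e) \<noteq> 0 then chi (x * ?l) else 0)"
        using Eset[of x] by (auto simp: mult.commute)
    qed
    also have "\<dots> = (\<Sum>x\<in>UNIV. chi (?l * x)) - 2 * (\<Sum>x\<in>UNIV. if Tr n (x ^ e) \<noteq> 0 then chi (x * ?l) else 0)"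
      by (simp only: sum_subtractf sum_distrib_left)
    also have "(\<Sum>x\<in>UNIV. if Tr n (x ^ e) \<noteq> 0 then chi (x * ?l) else 0) = (\<Sum>x\<in>EE. chi (x * ?l))"
      by (simp only: sum_filter_UNIV)
    also have "2 * (\<Sum>x\<in>EE. chi (x * ?l)) = A ?l" by (rule A_EE[symmetric])
    finally show ?thesis by (simp add: chi_sum)
  qed
  show "walsh n (charf {(x + 1) ^ s + x ^ s | x::'a. True}) \<mu>
           = walsh n (charf {x::'a. Tr n (x ^ (2 ^ i + 1)) = 1}) ?l"
    unfolding lhs rhs using mu0 by simp
  show "walsh n (charf {x::'a. Tr n (x ^ (2 ^ i + 1)) = 1}) ?l
           = (\<Sum>x\<in>(UNIV::'a set). (-1::int) ^ of_bool (Tr_bit n (x ^ (2 ^ i + 1) + ?l * x)))"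
    unfolding walsh_def charf_def
  proof (rule sum.cong[OF refl])
    fix x :: 'a
    have "(-1::int) ^ of_bool (Tr_bit n (x ^ (2 ^ i + 1) + ?l * x)) = chi (x ^ (2 ^ i + 1) + ?l * x)"
      unfolding chi_def ..
    also have "\<dots> = chi (x ^ (2 ^ i + 1)) * chi (?l * x)" by (rule chi_add)
    also have "chi (x ^ (2 ^ i + 1)) = (-1) ^ of_bool (x \<in> {x::'a. Tr n (x ^ (2 ^ i + 1)) = 1})"
      using Eset[of x] unfolding chi_alt by simp
    finally show "(-1::int) ^ (of_bool (x \<in> {x::'a. Tr n (x ^ (2 ^ i + 1)) = 1}) + of_bool (Tr_bit n (?l * x)))
        = (-1) ^ of_bool (Tr_bit n (x ^ (2 ^ i + 1) + ?l * x))"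
      unfolding chi_def by (simp add: power_add)
  qed
qed

end

context gf2n
begin

lemma pow_comm: "((x::'a) ^ a) ^ b = (x ^ b) ^ a"
  by (simp add: power_mult[symmetric] mult.commute)

lemma rho_pow: "(x::'a) ^ r = x' \<Longrightarrow> (x ^ a) ^ r = x' ^ a"
  by (metis pow_comm)

lemma Tr_rho2: "r = 2 ^ k \<Longrightarrow> Tr n (((x::'a) ^ r) ^ r) = Tr n x"
  by (simp add: pp Tr_frob)

lemma Tr_rho1: "r = 2 ^ k \<Longrightarrow> Tr n ((x::'a) ^ r) = Tr n x"
  by (simp add: Tr_frob)

lemma T1_core:
  fixes y y1 y2 :: 'a
  assumes y0: "y \<noteq> 0" and r: "r = 2 ^ k"
    and h0: "y ^ r = y1" and h1: "y1 ^ r = y2" and h2: "y2 ^ r = y ^ 2"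
  shows "Tr n (((1 + y ^ 3 + y1 ^ 3 + y2 ^ 3) / (y ^ 2 * y2)) *
               ((1 + y ^ 3 + y1 ^ 3 + y2 ^ 3) / (y ^ 2 * y2)) ^ r) = 0"
proof -
  have y1z: "y1 \<noteq> 0" using y0 h0 by (metis power_not_zero)
  have y2z: "y2 \<noteq> 0" using y1z h1 by (metis power_not_zero)
  have p0: "\<And>a. (y ^ a) ^ r = y1 ^ a" using rho_pow[OF h0] .
  have p1: "\<And>a. (y1 ^ a) ^ r = y2 ^ a" using rho_pow[OF h1] .
  have p2: "\<And>a. (y2 ^ a) ^ r = (y ^ 2) ^ a" using rho_pow[OF h2] .
  have one_r: "(1::'a) ^ r = 1" by simp
  define X where "X = (1 + y ^ 3 + y1 ^ 3 + y2 ^ 3) / (y ^ 2 * y2)"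
  have Xr: "X ^ r = (1 + y1 ^ 3 + y2 ^ 3 + (y ^ 2) ^ 3) / (y1 ^ 2 * (y ^ 2))"
    unfolding X_def r by (simp add: power_divide power_mult_distrib frob_add p0[unfolded r] p1[unfolded r] p2[unfolded r] h2[unfolded r])
  define A where "A = y ^ 3"
  define B where "B = y1 ^ 3"
  define C where "C = y2 ^ 3"
  define Dd where "Dd = y ^ 4 * y1 ^ 2 * y2"
  have Ddz: "Dd \<noteq> 0" unfolding Dd_def using y0 y1z y2z by simp
  have num: "(1 + A + B + C) * (1 + B + C + A ^ 2) =
     (1 + A + A ^ 2 + A ^ 3 + A * B + A * C + B ^ 2 + C ^ 2 + A ^ 2 * B + A ^ 2 * C) + 2 * (B + C + B * C)"
    by (simp add: algebra_simps power2_eq_square power3_eq_cube)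
  have XX: "X * X ^ r = (1 + A + A ^ 2 + A ^ 3 + A * B + A * C + B ^ 2 + C ^ 2 + A ^ 2 * B + A ^ 2 * C) / Dd"
  proof -
    have "X * X ^ r = ((1 + y ^ 3 + y1 ^ 3 + y2 ^ 3) / (y ^ 2 * y2)) * ((1 + y1 ^ 3 + y2 ^ 3 + (y ^ 2) ^ 3) / (y1 ^ 2 * (y ^ 2)))"
      unfolding Xr by (simp only: X_def)
    also have "\<dots> = ((1 + A + B + C) * (1 + B + C + A ^ 2)) / Dd"
      unfolding A_def B_def C_def Dd_def using y0 y1z y2z
      by (simp add: field_simps power_mult[symmetric])
    finally have "X * X ^ r = ((1 + A + B + C) * (1 + B + C + A ^ 2)) / Dd" .
    thus ?thesis unfolding num using two_zero by simp
  qed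
  have split: "(1 + A + A ^ 2 + A ^ 3 + A * B + A * C + B ^ 2 + C ^ 2 + A ^ 2 * B + A ^ 2 * C) / Dd
     = (1 / Dd + A / Dd) + (C ^ 2 / Dd + A ^ 3 / Dd) + (B ^ 2 / Dd + A * C / Dd)
       + (A ^ 2 / Dd + A * B / Dd) + (A ^ 2 * C / Dd + A ^ 2 * B / Dd)"
    by (simp add: add_divide_distrib algebra_simps)
  have rr: "\<And>x::'a. Tr n ((x ^ r) ^ r) = Tr n x" using Tr_rho2[OF r] .
  have pair: "\<And>p q::'a. p = (q ^ r) ^ r \<Longrightarrow> Tr n (p + q) = 0"
    using rr by (simp add: Tr_add two_zero)
  have pair1: "\<And>p q::'a. p = q ^ r \<Longrightarrow> Tr n (p + q) = 0"
    using Tr_rho1[OF r] by (simp add: Tr_add two_zero)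
  have pairsq: "\<And>p q g::'a. p = g ^ 2 \<Longrightarrow> q = g ^ r \<Longrightarrow> Tr n (p + q) = 0"
    using Tr_rho1[OF r] Tr_sq by (simp add: Tr_add two_zero)
  have rho2: "\<And>a b c. ((y ^ a * y1 ^ b * y2 ^ c) ^ r) ^ r = y2 ^ a * (y ^ 2) ^ b * (y1 ^ 2) ^ c"
  proof -
    fix a b c
    have "(y ^ a * y1 ^ b * y2 ^ c) ^ r = y1 ^ a * y2 ^ b * (y ^ 2) ^ c"
      by (simp add: power_mult_distrib p0 p1 p2)
    also have "\<dots> ^ r = y2 ^ a * (y ^ 2) ^ b * (y1 ^ 2) ^ c"
    proof -
      have q: "((y ^ 2) ^ c) ^ r = (y1 ^ 2) ^ c"
        using p0[of "2 * c"] by (simp add: power_mult)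
      show ?thesis by (simp add: power_mult_distrib p1 p2 q)
    qed
    finally show "((y ^ a * y1 ^ b * y2 ^ c) ^ r) ^ r = y2 ^ a * (y ^ 2) ^ b * (y1 ^ 2) ^ c" .
  qed
  have t1: "Tr n (1 / Dd + A / Dd) = 0"
  proof (rule pair)
    have "((A / Dd) ^ r) ^ r = ((y ^ 3 * y1 ^ 0 * y2 ^ 0) ^ r) ^ r / ((y ^ 4 * y1 ^ 2 * y2 ^ 1) ^ r) ^ r"
      unfolding A_def Dd_def by (simp add: power_divide)
    also have "\<dots> = 1 / Dd" unfolding rho2 Dd_def using y0 y1z y2z by (simp add: field_simps, (algebra)?)
    finally show "1 / Dd = ((A / Dd) ^ r) ^ r" by simp
  qed
  have t2: "Tr n (C ^ 2 / Dd + A ^ 3 / Dd) = 0"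
  proof (rule pair)
    have "((A ^ 3 / Dd) ^ r) ^ r = ((y ^ 9 * y1 ^ 0 * y2 ^ 0) ^ r) ^ r / ((y ^ 4 * y1 ^ 2 * y2 ^ 1) ^ r) ^ r"
      unfolding A_def Dd_def by (simp add: power_divide power_mult[symmetric])
    also have "\<dots> = C ^ 2 / Dd" unfolding rho2 Dd_def C_def using y0 y1z y2z by (simp add: field_simps, (algebra)?)
    finally show "C ^ 2 / Dd = ((A ^ 3 / Dd) ^ r) ^ r" by simp
  qed
  have t3: "Tr n (B ^ 2 / Dd + A * C / Dd) = 0"
  proof (rule pair)
    have "((A * C / Dd) ^ r) ^ r = ((y ^ 3 * y1 ^ 0 * y2 ^ 3) ^ r) ^ r / ((y ^ 4 * y1 ^ 2 * y2 ^ 1) ^ r) ^ r"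
      unfolding A_def C_def Dd_def by (simp add: power_divide)
    also have "\<dots> = B ^ 2 / Dd" unfolding rho2 Dd_def B_def using y0 y1z y2z by (simp add: field_simps, (algebra)?)
    finally show "B ^ 2 / Dd = ((A * C / Dd) ^ r) ^ r" by simp
  qed
  have t4: "Tr n (A ^ 2 / Dd + A * B / Dd) = 0"
  proof (rule pair)
    have "((A * B / Dd) ^ r) ^ r = ((y ^ 3 * y1 ^ 3 * y2 ^ 0) ^ r) ^ r / ((y ^ 4 * y1 ^ 2 * y2 ^ 1) ^ r) ^ r"
      unfolding A_def B_def Dd_def by (simp add: power_divide)
    also have "\<dots> = A ^ 2 / Dd" unfolding rho2 Dd_def A_def using y0 y1z y2z by (simp add: field_simps, (algebra)?)
    finally show "A ^ 2 / Dd = ((A * B / Dd) ^ r) ^ r" by simp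
  qed
  have t5: "Tr n (A ^ 2 * C / Dd + A ^ 2 * B / Dd) = 0"
  proof (rule pairsq)
    show "A ^ 2 * C / Dd = (y * y2 / y1) ^ 2"
      unfolding A_def C_def Dd_def using y0 y1z y2z by (simp add: field_simps, (algebra)?)
    have "(y * y2 / y1) ^ r = y1 * y ^ 2 / y2"
      by (simp add: power_divide power_mult_distrib h0 h1 h2)
    also have "\<dots> = A ^ 2 * B / Dd"
      unfolding A_def B_def Dd_def using y0 y1z y2z by (simp add: field_simps, (algebra)?)
    finally show "A ^ 2 * B / Dd = (y * y2 / y1) ^ r" by simp
  qed
  show ?thesis
    using t1 t2 t3 t4 t5 unfolding X_def[symmetric] XX split
    by (simp only: Tr_add add_0_right add_0_left)
qed

end

lemma es_nat: "((2::nat) ^ i + 1) * (2 ^ (2 * i) - 2 ^ i + 1) = 2 ^ (3 * i) + 1"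
proof -
  define t :: nat where "t = 2 ^ i"
  have t2: "(2::nat) ^ (2 * i) = t * t"
  proof -
    have "2 * i = i + i" by simp
    thus ?thesis unfolding t_def by (simp only: power_add)
  qed
  have t3: "(2::nat) ^ (3 * i) = t * t * t"
  proof -
    have "3 * i = i + i + i" by simp
    thus ?thesis unfolding t_def by (simp only: power_add)
  qed
  have tt: "t \<le> t * t" unfolding t_def by simp
  then obtain k where k: "t * t = t + k" using le_Suc_ex by blast
  have "(t + 1) * (t * t - t + 1) = (t + 1) * (k + 1)" using k by simp
  also have "\<dots> = t * t * t + 1" using k by (simp add: algebra_simps)
  finally show ?thesis unfolding t2 t3 t_def by simp
qed

context gf2n
begin

lemma frob_surj: "\<exists>y::'a. y ^ (2 ^ k) = z"
proof -
  have "inj (\<lambda>y::'a. y ^ (2 ^ k))" by (rule injI) (rule frob_inj)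
  hence "surj (\<lambda>y::'a. y ^ (2 ^ k))" by (intro finite_UNIV_inj_surj) simp_all
  thus ?thesis by (metis surjD)
qed

lemma Tr3: "Tr n (w + (w::'a) ^ (2 ^ a) + w ^ (2 ^ b)) = Tr n w"
proof -
  have "Tr n (w + w ^ (2 ^ a) + w ^ (2 ^ b)) = Tr n w + 2 * Tr n w"
    by (simp add: Tr_add Tr_frob)
  thus ?thesis using two_zero by simp
qed

lemma sA_prop:
  assumes nA: "n = 3 * i - 1" and i1: "1 \<le> i"
  shows "Tr n (((u::'a) ^ (2 ^ i + 1)) ^ (2 ^ (2 * i) - 2 ^ i + 1)) = Tr n (u ^ 3)"
proof -
  have e1: "(u ^ (2 ^ i + 1)) ^ (2 ^ (2 * i) - 2 ^ i + 1) = u ^ (2 ^ (3 * i) + 1)"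
    by (simp only: power_mult[symmetric] es_nat)
  have "3 * i = n * 1 + 1" using nA i1 by simp
  hence e2: "u ^ (2 ^ (3 * i)) = u ^ 2" using pow_pow2_mult[of u 1 1] by simp
  have "u ^ (2 ^ (3 * i) + 1) = u ^ 2 * u" by (simp only: power_add e2 power_one_right)
  also have "\<dots> = u ^ 3" by (simp add: power3_eq_cube power2_eq_square)
  finally show ?thesis unfolding e1 by simp
qed

lemma sB_prop:
  assumes nB: "n = 3 * i + 1"
  shows "Tr n (((u::'a) ^ (2 ^ i + 1)) ^ (2 ^ (2 * i) - 2 ^ i + 1)) = Tr n (u ^ 3)"
proof -
  have e1: "(u ^ (2 ^ i + 1)) ^ (2 ^ (2 * i) - 2 ^ i + 1) = u ^ (2 ^ (3 * i) + 1)"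
    by (simp only: power_mult[symmetric] es_nat)
  have "3 * i = n - 1" using nB by simp
  hence e: "(u ^ (2 ^ i + 1)) ^ (2 ^ (2 * i) - 2 ^ i + 1) = u ^ (2 ^ (n - 1)) * u"
    unfolding e1 by simp
  have "(u ^ (2 ^ (n - 1)) * u) ^ 2 = (u ^ (2 ^ (n - 1))) ^ (2 ^ 1) * u ^ 2" by (simp add: power_mult_distrib)
  also have "(u ^ (2 ^ (n - 1))) ^ (2 ^ 1) = u ^ (2 ^ (n - 1 + 1))" by (rule pp)
  also have "n - 1 + 1 = n" using nB by simp
  finally have "(u ^ (2 ^ (n - 1)) * u) ^ 2 = u ^ 3" using pow_q by (simp add: power3_eq_cube power2_eq_square)
  hence "Tr n (u ^ (2 ^ (n - 1)) * u) = Tr n (u ^ 3)" using Tr_sq[of "u ^ (2 ^ (n - 1)) * u"] by simp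
  thus ?thesis unfolding e .
qed

lemma FA_eq:
  assumes nA: "n = 3 * i - 1" and i1: "1 \<le> i"
  shows "(w + w ^ (2 ^ (2 * i - 1)) + w ^ (2 ^ (i - 1))) + (w + w ^ (2 ^ (2 * i - 1)) + (w::'a) ^ (2 ^ (i - 1))) ^ (2 ^ i)
       = w ^ (2 ^ i) + w ^ (2 ^ (i - 1))"
proof -
  have a: "(w ^ (2 ^ (2 * i - 1))) ^ (2 ^ i) = w" 
  proof -
    have "(w ^ (2 ^ (2 * i - 1))) ^ (2 ^ i) = w ^ (2 ^ (2 * i - 1 + i))" by (rule pp)
    also have "2 * i - 1 + i = n" using nA i1 by simp
    finally show ?thesis using pow_q by simp
  qed
  have b: "(w ^ (2 ^ (i - 1))) ^ (2 ^ i) = w ^ (2 ^ (2 * i - 1))"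
  proof -
    have "(w ^ (2 ^ (i - 1))) ^ (2 ^ i) = w ^ (2 ^ (i - 1 + i))" by (rule pp)
    also have "i - 1 + i = 2 * i - 1" using i1 by simp
    finally show ?thesis .
  qed
  have "(w + w ^ (2 ^ (2 * i - 1)) + w ^ (2 ^ (i - 1))) ^ (2 ^ i) = w ^ (2 ^ i) + w + w ^ (2 ^ (2 * i - 1))"
    by (simp only: frob_add a b)
  hence "(w + w ^ (2 ^ (2 * i - 1)) + w ^ (2 ^ (i - 1))) + (w + w ^ (2 ^ (2 * i - 1)) + w ^ (2 ^ (i - 1))) ^ (2 ^ i)
      = (w ^ (2 ^ i) + w ^ (2 ^ (i - 1))) + 2 * (w + w ^ (2 ^ (2 * i - 1)))"
    by (simp add: algebra_simps)
  thus ?thesis using two_zero by simp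
qed

lemma FB_eq:
  assumes nB: "n = 3 * i + 1" and i1: "1 \<le> i"
  shows "(w ^ (2 ^ i) + w ^ (2 ^ (2 * i)) + w ^ (2 ^ (3 * i))) + (w ^ (2 ^ i) + w ^ (2 ^ (2 * i)) + (w::'a) ^ (2 ^ (3 * i))) ^ (2 ^ i)
       = w ^ (2 ^ i) + w ^ (2 ^ (i - 1))"
proof -
  have a: "(w ^ (2 ^ i)) ^ (2 ^ i) = w ^ (2 ^ (2 * i))" by (simp add: pp mult_2)
  have b: "(w ^ (2 ^ (2 * i))) ^ (2 ^ i) = w ^ (2 ^ (3 * i))" by (simp add: pp)
  have c: "(w ^ (2 ^ (3 * i))) ^ (2 ^ i) = w ^ (2 ^ (i - 1))"
  proof -
    have "(w ^ (2 ^ (3 * i))) ^ (2 ^ i) = w ^ (2 ^ (3 * i + i))" by (rule pp)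
    also have "3 * i + i = n * 1 + (i - 1)" using nB i1 by simp
    also have "w ^ (2 ^ (n * 1 + (i - 1))) = w ^ (2 ^ (i - 1))" by (rule pow_pow2_mult)
    finally show ?thesis .
  qed
  have "(w ^ (2 ^ i) + w ^ (2 ^ (2 * i)) + w ^ (2 ^ (3 * i))) ^ (2 ^ i) = w ^ (2 ^ (2 * i)) + w ^ (2 ^ (3 * i)) + w ^ (2 ^ (i - 1))"
    by (simp only: frob_add a b c)
  hence "(w ^ (2 ^ i) + w ^ (2 ^ (2 * i)) + w ^ (2 ^ (3 * i))) + (w ^ (2 ^ i) + w ^ (2 ^ (2 * i)) + w ^ (2 ^ (3 * i))) ^ (2 ^ i)
      = (w ^ (2 ^ i) + w ^ (2 ^ (i - 1))) + 2 * (w ^ (2 ^ (2 * i)) + w ^ (2 ^ (3 * i)))"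
    by (simp add: algebra_simps)
  thus ?thesis using two_zero by simp
qed

lemma TrFB: "Tr n ((w::'a) ^ (2 ^ i) + w ^ (2 ^ (2 * i)) + w ^ (2 ^ (3 * i))) = Tr n w"
proof -
  have "Tr n (w ^ (2 ^ i) + w ^ (2 ^ (2 * i)) + w ^ (2 ^ (3 * i))) = Tr n w + 2 * Tr n w"
    by (simp add: Tr_add Tr_frob)
  thus ?thesis using two_zero by simp
qed

end

context gf2n
begin

lemma T1A:
  assumes nA: "n = 3 * i - 1" and i1: "1 \<le> i" and z0: "(z::'a) \<noteq> 0"
  shows "Tr n ((((z ^ 3) + (z ^ 3) ^ (2 ^ (2 * i - 1)) + (z ^ 3) ^ (2 ^ (i - 1)) + 1) / z ^ (2 ^ i + 1)) ^ (2 ^ i + 1)) = 0"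
proof -
  obtain y :: 'a where yz: "y ^ (2 ^ (2 * i)) = z" using frob_surj by blast
  have y0: "y \<noteq> 0"
  proof
    assume "y = 0"
    hence "z = 0" using yz by (simp add: power_0_left)
    thus False using z0 by simp
  qed
  define y1 where "y1 = y ^ (2 ^ i)"
  define y2 where "y2 = y1 ^ (2 ^ i)"
  have h0: "y ^ (2 ^ i) = y1" unfolding y1_def ..
  have h1: "y1 ^ (2 ^ i) = y2" unfolding y2_def ..
  have y2z: "y2 = z" unfolding y2_def y1_def using yz by (simp add: pp mult_2)
  have h2: "y2 ^ (2 ^ i) = y ^ 2"
  proof -
    have "y2 ^ (2 ^ i) = y ^ (2 ^ (2 * i + i))" unfolding y2z yz[symmetric] by (rule pp)
    also have "2 * i + i = n * 1 + 1" using nA i1 by simp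
    also have "y ^ (2 ^ (n * 1 + 1)) = y ^ (2 ^ 1)" by (rule pow_pow2_mult)
    finally show ?thesis by simp
  qed
  have f1: "(z ^ 3) ^ (2 ^ (2 * i - 1)) = y1 ^ 3"
  proof -
    have "z ^ (2 ^ (2 * i - 1)) = y ^ (2 ^ (2 * i + (2 * i - 1)))" unfolding yz[symmetric] by (rule pp)
    also have "2 * i + (2 * i - 1) = n * 1 + i" using nA i1 by simp
    also have "y ^ (2 ^ (n * 1 + i)) = y1" unfolding y1_def by (rule pow_pow2_mult)
    finally show ?thesis by (metis pow_comm)
  qed
  have f2: "(z ^ 3) ^ (2 ^ (i - 1)) = y ^ 3"
  proof -
    have "z ^ (2 ^ (i - 1)) = y ^ (2 ^ (2 * i + (i - 1)))" unfolding yz[symmetric] by (rule pp)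
    also have "2 * i + (i - 1) = n" using nA i1 by simp
    finally have "z ^ (2 ^ (i - 1)) = y" using pow_q by simp
    thus ?thesis by (metis pow_comm)
  qed
  have ze: "z ^ (2 ^ i + 1) = y ^ 2 * y2"
    using h2 y2z by (simp add: power_add)
  define X where "X = (1 + y ^ 3 + y1 ^ 3 + y2 ^ 3) / (y ^ 2 * y2)"
  have eqX: "((z ^ 3) + (z ^ 3) ^ (2 ^ (2 * i - 1)) + (z ^ 3) ^ (2 ^ (i - 1)) + 1) / z ^ (2 ^ i + 1) = X"
    unfolding f1 f2 ze X_def using y2z by (simp add: add_ac)
  have "X ^ (2 ^ i + 1) = X * X ^ (2 ^ i)" by (simp add: power_add mult.commute)
  moreover have "Tr n (X * X ^ (2 ^ i)) = 0"
    unfolding X_def by (rule T1_core[OF y0 refl h0 h1 h2])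
  ultimately show ?thesis unfolding eqX by simp
qed

lemma T1B:
  assumes nB: "n = 3 * i + 1" and i1: "1 \<le> i" and z0: "(z::'a) \<noteq> 0"
  shows "Tr n ((((z ^ 3) ^ (2 ^ i) + (z ^ 3) ^ (2 ^ (2 * i)) + (z ^ 3) ^ (2 ^ (3 * i)) + 1) / z ^ (2 ^ i + 1)) ^ (2 ^ i + 1)) = 0"
proof -
  obtain y :: 'a where yz: "y ^ (2 ^ 1) = z" using frob_surj by blast
  have y0: "y \<noteq> 0"
  proof
    assume "y = 0"
    hence "z = 0" using yz by (simp add: power_0_left)
    thus False using z0 by simp
  qed
  define r :: nat where "r = 2 ^ (2 * i + 1)"
  define y1 where "y1 = y ^ r"
  define y2 where "y2 = y1 ^ r"
  have h0: "y ^ r = y1" unfolding y1_def ..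
  have h1: "y1 ^ r = y2" unfolding y2_def ..
  have y2z: "y2 = z ^ (2 ^ i)"
  proof -
    have "y2 = y ^ (2 ^ ((2 * i + 1) + (2 * i + 1)))" unfolding y2_def y1_def r_def by (rule pp)
    also have "(2 * i + 1) + (2 * i + 1) = n * 1 + (1 + i)" using nB by simp
    also have "y ^ (2 ^ (n * 1 + (1 + i))) = y ^ (2 ^ (1 + i))" by (rule pow_pow2_mult)
    also have "\<dots> = z ^ (2 ^ i)" unfolding yz[symmetric] by (rule pp[symmetric])
    finally show ?thesis .
  qed
  have h2: "y2 ^ r = y ^ 2"
  proof -
    have "y2 ^ r = ((y ^ (2 ^ 1)) ^ (2 ^ i)) ^ (2 ^ (2 * i + 1))" unfolding y2z r_def yz ..
    also have "\<dots> = y ^ (2 ^ ((1 + i) + (2 * i + 1)))" by (simp only: pp)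
    also have "(1 + i) + (2 * i + 1) = n * 1 + 1" using nB by simp
    also have "y ^ (2 ^ (n * 1 + 1)) = y ^ (2 ^ 1)" by (rule pow_pow2_mult)
    finally show ?thesis by simp
  qed
  have f1: "(z ^ 3) ^ (2 ^ i) = y2 ^ 3" using y2z by (metis pow_comm)
  have f2: "(z ^ 3) ^ (2 ^ (2 * i)) = y1 ^ 3"
  proof -
    have "z ^ (2 ^ (2 * i)) = y ^ (2 ^ (1 + 2 * i))" unfolding yz[symmetric] by (rule pp)
    also have "\<dots> = y1" unfolding y1_def r_def by simp
    finally show ?thesis by (metis pow_comm)
  qed
  have f3: "(z ^ 3) ^ (2 ^ (3 * i)) = y ^ 3"
  proof -
    have "z ^ (2 ^ (3 * i)) = y ^ (2 ^ (1 + 3 * i))" unfolding yz[symmetric] by (rule pp)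
    also have "1 + 3 * i = n" using nB by simp
    finally have "z ^ (2 ^ (3 * i)) = y" using pow_q by simp
    thus ?thesis by (metis pow_comm)
  qed
  have ze: "z ^ (2 ^ i + 1) = y ^ 2 * y2"
    using y2z yz by (simp add: power_add mult.commute)
  define X where "X = (1 + y ^ 3 + y1 ^ 3 + y2 ^ 3) / (y ^ 2 * y2)"
  have eqX: "((z ^ 3) ^ (2 ^ i) + (z ^ 3) ^ (2 ^ (2 * i)) + (z ^ 3) ^ (2 ^ (3 * i)) + 1) / z ^ (2 ^ i + 1) = X"
    unfolding f1 f2 f3 ze X_def by (simp add: add_ac)
  have Xtr: "(X ^ (2 ^ i)) ^ r = X"
  proof -
    have "(X ^ (2 ^ i)) ^ r = X ^ (2 ^ (i + (2 * i + 1)))" unfolding r_def by (rule pp)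
    also have "i + (2 * i + 1) = n" using nB by simp
    finally show ?thesis using pow_q by simp
  qed
  have "Tr n (X ^ (2 ^ i + 1)) = Tr n (X ^ (2 ^ i) * X)" by (simp only: power_add power_one_right)
  also have "\<dots> = Tr n ((X ^ (2 ^ i) * X) ^ r)" unfolding r_def by (rule Tr_frob[symmetric])
  also have "(X ^ (2 ^ i) * X) ^ r = X * X ^ r" by (simp add: power_mult_distrib Xtr)
  also have "Tr n (X * X ^ r) = 0"
    unfolding X_def by (rule T1_core[OF y0 r_def h0 h1 h2])
  finally show ?thesis unfolding eqX .
qed

end

theorem proposition17:
  fixes i n s d :: nat
    and \<mu> :: "'a::{field,finite}"
  assumes "even i" and "i > 0"
    and "n = 3 * i + 1 \<or> n = 3 * i - 1"
    and "CARD('a) = 2 ^ n"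
    and "s = 2 ^ (2 * i) - 2 ^ i + 1"
    and "(s * d) mod (2 ^ n - 1) = 1"
  shows "walsh n (charf {(x + 1) ^ s + x ^ s | x::'a. True}) \<mu>
           = walsh n (charf {x::'a. Tr n (x ^ (2 ^ i + 1)) = 1}) (\<mu> ^ d)
       \<and> walsh n (charf {x::'a. Tr n (x ^ (2 ^ i + 1)) = 1}) (\<mu> ^ d)
           = (\<Sum>x\<in>(UNIV::'a set). (-1::int) ^ of_bool (Tr_bit n (x ^ (2 ^ i + 1) + \<mu> ^ d * x)))"
proof -
  note ev = assms(1) and ip = assms(2) and nn = assms(3) and cd = assms(4)
    and sdef = assms(5) and sdm = assms(6)
  interpret G: gf2n n "TYPE('a)" by unfold_locales (rule cd)
  have i2: "2 \<le> i"
  proof (rule ccontr)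
    assume "\<not> 2 \<le> i"
    hence "i = 1" using ip by simp
    thus False using ev by simp
  qed
  have n_odd: "odd n" using nn ev ip by auto
  have i_lt: "i < n" using nn i2 by auto
  have cop_i: "coprime i n"
  proof (rule coprimeI)
    fix c assume ci: "c dvd i" and cn: "c dvd n"
    have c3: "c dvd 3 * i" using ci by simp
    show "c dvd 1"
      using nn
    proof
      assume "n = 3 * i + 1"
      hence "c dvd 3 * i + 1" using cn by simp
      thus "c dvd 1" using c3 by (metis dvd_add_right_iff)
    next
      assume nA: "n = 3 * i - 1"
      have "3 * i - n = 1" using nA i2 by simp
      moreover have "c dvd 3 * i - n" using c3 cn by (rule dvd_diff_nat)
      ultimately show "c dvd 1" by simp
    qed
  qed
  have cop_2: "coprime 2 n" using n_odd by simp
  have cop_2i: "coprime (2 * i) n" using cop_2 cop_i by simp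
  have s0: "0 < s" using sdef by simp
  have d0: "0 < d"
  proof (rule ccontr)
    assume "\<not> 0 < d" hence "d = 0" by simp
    thus False using sdm by simp
  qed
  have sdx: "\<And>x::'a. (x ^ d) ^ s = x"
  proof -
    fix x :: 'a
    define k where "k = (s * d) div (2 ^ n - 1)"
    have e: "s * d = (s * d) div (2 ^ n - 1) * (2 ^ n - 1) + (s * d) mod (2 ^ n - 1)"
      by (rule div_mult_mod_eq[symmetric])
    hence e2: "s * d = k * (2 ^ n - 1) + 1" unfolding k_def sdm .
    have sdk: "d * s = (2 ^ n - 1) * k + 1"
      using e2 by (metis mult.commute)
    show "(x ^ d) ^ s = x"
    proof (cases "x = 0")
      case True thus ?thesis using d0 s0 by simp
    next
      case False
      have "(x ^ d) ^ s = x ^ ((2 ^ n - 1) * k + 1)" by (simp add: power_mult[symmetric] sdk)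
      also have "\<dots> = (x ^ (CARD('a) - 1)) ^ k * x" by (simp add: power_mult power_add cd)
      also have "x ^ (CARD('a) - 1) = 1" by (rule G.pow_card_minus1[OF False])
      finally show ?thesis by simp
    qed
  qed
  show ?thesis using nn
  proof
    assume nB: "n = 3 * i + 1"
    define FB where "FB = (\<lambda>w::'a. w ^ (2 ^ i) + w ^ (2 ^ (2 * i)) + w ^ (2 ^ (3 * i)))"
    interpret K: kas n "TYPE('a)" i s FB
    proof unfold_locales
      show "odd n" by (rule n_odd)
      show "0 < i" by (rule ip)
      show "i < n" by (rule i_lt)
      show "coprime i n" by (rule cop_i)
      show "coprime (2 * i) n" by (rule cop_2i)
      show "\<And>w. FB w + FB w ^ (2 ^ i) = w ^ (2 ^ i) + w ^ (2 ^ (i - 1))"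
        unfolding FB_def using G.FB_eq[OF nB] i2 by simp
      show "\<And>w. Tr n (FB w) = Tr n w" unfolding FB_def by (rule G.TrFB)
      show "\<And>z::'a. z \<noteq> 0 \<Longrightarrow> Tr n (((FB (z ^ 3) + 1) / z ^ (2 ^ i + 1)) ^ (2 ^ i + 1)) = 0"
        unfolding FB_def using G.T1B[OF nB] i2 by simp
      show "\<And>u::'a. Tr n ((u ^ (2 ^ i + 1)) ^ s) = Tr n (u ^ 3)"
        unfolding sdef by (rule G.sB_prop[OF nB])
    qed
    show ?thesis by (rule K.kas_main[OF sdx s0 d0])
  next
    assume nA: "n = 3 * i - 1"
    define FA where "FA = (\<lambda>w::'a. w + w ^ (2 ^ (2 * i - 1)) + w ^ (2 ^ (i - 1)))"
    interpret K: kas n "TYPE('a)" i s FA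
    proof unfold_locales
      show "odd n" by (rule n_odd)
      show "0 < i" by (rule ip)
      show "i < n" by (rule i_lt)
      show "coprime i n" by (rule cop_i)
      show "coprime (2 * i) n" by (rule cop_2i)
      show "\<And>w. FA w + FA w ^ (2 ^ i) = w ^ (2 ^ i) + w ^ (2 ^ (i - 1))"
        unfolding FA_def using G.FA_eq[OF nA] i2 by simp
      show "\<And>w. Tr n (FA w) = Tr n w" unfolding FA_def by (rule G.Tr3)
      show "\<And>z::'a. z \<noteq> 0 \<Longrightarrow> Tr n (((FA (z ^ 3) + 1) / z ^ (2 ^ i + 1)) ^ (2 ^ i + 1)) = 0"
        unfolding FA_def using G.T1A[OF nA] i2 by simp
      show "\<And>u::'a. Tr n ((u ^ (2 ^ i + 1)) ^ s) = Tr n (u ^ 3)"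
        unfolding sdef using G.sA_prop[OF nA] i2 by simp
    qed
    show ?thesis by (rule K.kas_main[OF sdx s0 d0])
  qed
qed


end
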